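(* Let $\Omega\subset\mathbb{R}^N$ be an open domain, assume $C_b^\infty(\mathbb{R}^N)\subset\mathcal{X}$, let $g\in\overline{\mathcal{X}}$, and for each $\rho>0$ let $\mathcal{A}_\rho:\Omega\times\mathcal{X}\times\mathbb{R}\to\mathbb{R}$ satisfy assumptions (a), (b), (c) below. Assume the scheme is consistent and weakly stable (as defined in the context), and let $\{u_\rho\}_{\rho>0}$ be the uniformly bounded family of viscosity solutions of the DPP given by weak stability. Then $$\overline{u}(x):=\limsup_{\rho\to0,\,y\to x}u_\rho(y)\quad\text{and}\quad\underline{u}(x):=\liminf_{\rho\to0,\,y\to x}u_\rho(y)$$ are, respectively, an upper semicontinuous viscosity subsolution and a lower semicontinuous viscosity supersolution of the boundary value problem $F(x,u,\nabla u,D^2u)=0$ in $\Omega$, $u=g$ on $\partial\Omega$.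
   Context: $\overline{\mathcal{X}}$ is the set of bounded functions $\mathbb{R}^N\to\mathbb{R}$, $\mathcal{X}\subset\overline{\mathcal{X}}$ a fixed subset. Assumptions on each $\mathcal{A}_\rho$: (a) $\varphi_1\le\varphi_2$ implies $\mathcal{A}_\rho(x,\varphi_2,s)\le\mathcal{A}_\rho(x,\varphi_1,s)$; (b) $s_1\le s_2$ implies $\mathcal{A}_\rho(x,\varphi,s_1)\le\mathcal{A}_\rho(x,\varphi,s_2)$; (c) for each $(x,\varphi)$, $s\mapsto\mathcal{A}_\rho(x,\varphi,s)$ has exactly one zero. DPP: $\mathcal{A}_\rho(x,u,u(x))=0$ for $x\in\Omega$, $u=g$ on $\mathbb{R}^N\setminus\Omega$. A viscosity supersolution of the DPP is $u\in\overline{\mathcal{X}}$ with $u\ge g$ on $\mathbb{R}^N\setminus\Omega$ and, for each $x\in\Omega$, $\mathcal{A}_\rho(x,\varphi,u(x))\ge0$ for all $\varphi\in\mathcal{X}$ with $\varphi\le u$; a viscosity subsolution is $u\in\overline{\mathcal{X}}$ with $u\le g$ on $\mathbb{R}^N\setminus\Omega$ and, for each $x\in\Omega$, $\mathcal{A}_\rho(x,\varphi,u(x))\le0$ for all $\varphi\in\mathcal{X}$ with $\varphi\ge u$; a viscosity solution is both. $\mathcal{B}_\rho(x,\varphi,s):=\mathcal{A}_\rho(x,\varphi,s)$ for $x\in\Omega$ and $:=s-g(x)$ for $x\in\mathbb{R}^N\setminus\Omega$. $F:\Omega\times\mathbb{R}\times\mathbb{R}^N\times S^N\to\mathbb{R}$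 ($S^N$ = symmetric $N\times N$ matrices) is proper (nondecreasing in the second variable) and elliptic ($F(x,s,p,\overline M)\le F(x,s,p,\underline M)$ whenever $\overline M\ge\underline M$). For a function $z$ on a set $C$, $z^*(x)=\limsup_{y\to x,\,y\in C}z(y)$ and $z_*(x)=\liminf_{y\to x,\,y\in C}z(y)$ (for $F$ these envelopes are taken in all variables, defined for $x\in\overline\Omega$). Consistency: for all $x\in\overline\Omega$ and $\varphi\in C_b^\infty(\mathbb{R}^N)$ there is a positive modulus $\omega$ (continuous, strictly increasing $\omega:\mathbb{R}_+\to\mathbb{R}_+$, $\omega(0)=0$) such that $\limsup_{\rho\to0^+,y\to x,\xi\to0}\mathcal{B}_\rho(y,\varphi+\xi,\varphi(y)+\xi+\omega(\rho))\le F^*(x,\varphi(x),\nabla\varphi(x),D^2\varphi(x))$ if $x\in\Omega$, and $\le\max\{\varphi(x)-g_*(x),F^*(x,\varphi(x),\nabla\varphi(x),D^2\varphi(x))\}$ if $x\in\partial\Omega$; and $\liminf_{\rho\to0^+,y\to x,\xi\to0}\mathcal{B}_\rho(y,\varphi+\xi,\varphi(y)+\xi-\omega(\rho))\ge F_*(x,\varphi(x),\nabla\varphi(x),D^2\varphi(x))$ if $x\in\Omega$, and $\ge\min\{\varphi(x)-g^*(x),F_*(x,\varphi(x),\nabla\varphi(x),D^2\varphi(x))\}$ if $x\in\partial\Omega$. Weak stability: for every $\rho>0$ there exists a viscosity solution $u_\rho\in\overline{\mathcal{X}}$ of the DPP, with $\sup_{\mathbb{R}^N}|u_\rho|$ bounded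 independently of $\rho$. Viscosity solutions of the PDE problem: $u\in\overline{\mathcal{X}}$ is a viscosity subsolution if for all $\varphi\in C_b^\infty(\mathbb{R}^N)$ and all $x\in\overline\Omega$ at which $u^*-\varphi$ attains its global maximum (over $\overline\Omega$), $F_*(x,u^*(x),\nabla\varphi(x),D^2\varphi(x))\le0$ when $x\in\Omega$ and $\min\{u^*(x)-g^*(x),F_*(x,u^*(x),\nabla\varphi(x),D^2\varphi(x))\}\le0$ when $x\in\partial\Omega$. It is a viscosity supersolution if for all such $\varphi$ and $x\in\overline\Omega$ at which $u_*-\varphi$ attains its global minimum, $F^*(x,u_*(x),\nabla\varphi(x),D^2\varphi(x))\ge0$ when $x\in\Omega$ and $\max\{u_*(x)-g_*(x),F^*(x,u_*(x),\nabla\varphi(x),D^2\varphi(x))\}\ge0$ when $x\in\partial\Omega$. *)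

theory Defs
  imports "HOL-Analysis.Analysis" "HOL-Library.Liminf_Limsup"
begin

type_synonym 'n pt = "real ^ 'n"
type_synonym 'n mat = "real ^ 'n ^ 'n"

definition partial :: "'n::finite \<Rightarrow> ('n pt \<Rightarrow> real) \<Rightarrow> 'n pt \<Rightarrow> real" where
  "partial i f x = deriv (\<lambda>t. f (x + t *\<^sub>R axis i 1)) 0"

fun ipartial :: "'n::finite list \<Rightarrow> ('n pt \<Rightarrow> real) \<Rightarrow> 'n pt \<Rightarrow> real" where
  "ipartial [] f = f"
| "ipartial (i # is) f = partial i (ipartial is f)"

definition grad :: "('n::finite pt \<Rightarrow> real) \<Rightarrow> 'n pt \<Rightarrow> 'n pt" where
  "grad f x = (\<chi> i. partial i f x)"

definition hess :: "('n::finite pt \<Rightarrow> real) \<Rightarrow> 'n pt \<Rightarrow> 'n mat" where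
  "hess f x = (\<chi> i j. partial i (partial j f) x)"

definition Cb_inf :: "('n::finite pt \<Rightarrow> real) set" where
  "Cb_inf = {f. \<forall>is. (\<forall>x. ipartial is f differentiable (at x))
                     \<and> bounded (range (ipartial is f))}"

definition Xbar :: "('n::finite pt \<Rightarrow> real) set" where
  "Xbar = {u. bounded (range u)}"

definition sym_mats :: "'n::finite mat set" where
  "sym_mats = {M. transpose M = M}"

definition mat_le :: "'n::finite mat \<Rightarrow> 'n mat \<Rightarrow> bool" where
  "mat_le M1 M2 \<longleftrightarrow> (\<forall>v. 0 \<le> v \<bullet> ((M2 - M1) *v v))"

definition usc_env :: "'a::topological_space set \<Rightarrow> ('a \<Rightarrow> real) \<Rightarrow> 'a \<Rightarrow> ereal" where
  "usc_env C z x = Limsup (inf (nhds x) (principal C)) (\<lambda>y. ereal (z y))"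

definition lsc_env :: "'a::topological_space set \<Rightarrow> ('a \<Rightarrow> real) \<Rightarrow> 'a \<Rightarrow> ereal" where
  "lsc_env C z x = Liminf (inf (nhds x) (principal C)) (\<lambda>y. ereal (z y))"

text \<open>Envelopes of a bounded function on R^N (finite, hence real-valued).\<close>
definition ustar :: "('n::finite pt \<Rightarrow> real) \<Rightarrow> 'n pt \<Rightarrow> real" where
  "ustar u x = real_of_ereal (usc_env UNIV u x)"

definition lstar :: "('n::finite pt \<Rightarrow> real) \<Rightarrow> 'n pt \<Rightarrow> real" where
  "lstar u x = real_of_ereal (lsc_env UNIV u x)"

definition Fupper :: "'n::finite pt set \<Rightarrow> ('n pt \<Rightarrow> real \<Rightarrow> 'n pt \<Rightarrow> 'n mat \<Rightarrow> real)
    \<Rightarrow> 'n pt \<Rightarrow> real \<Rightarrow> 'n pt \<Rightarrow> 'n mat \<Rightarrow> ereal" where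
  "Fupper \<Omega> F x s p M =
     usc_env (\<Omega> \<times> UNIV \<times> UNIV \<times> sym_mats) (\<lambda>(y, t, q, P). F y t q P) (x, s, p, M)"

definition Flower :: "'n::finite pt set \<Rightarrow> ('n pt \<Rightarrow> real \<Rightarrow> 'n pt \<Rightarrow> 'n mat \<Rightarrow> real)
    \<Rightarrow> 'n pt \<Rightarrow> real \<Rightarrow> 'n pt \<Rightarrow> 'n mat \<Rightarrow> ereal" where
  "Flower \<Omega> F x s p M =
     lsc_env (\<Omega> \<times> UNIV \<times> UNIV \<times> sym_mats) (\<lambda>(y, t, q, P). F y t q P) (x, s, p, M)"

definition positive_modulus :: "(real \<Rightarrow> real) \<Rightarrow> bool" where
  "positive_modulus \<omega> \<longleftrightarrow> \<omega> 0 = 0 \<and> continuous_on {0..} \<omega> \<and> strict_mono_on {0..} \<omega>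
      \<and> (\<forall>t\<ge>0. 0 \<le> \<omega> t)"

definition upper_semicont :: "('a::topological_space \<Rightarrow> real) \<Rightarrow> bool" where
  "upper_semicont u \<longleftrightarrow> (\<forall>t. open {x. u x < t})"

definition lower_semicont :: "('a::topological_space \<Rightarrow> real) \<Rightarrow> bool" where
  "lower_semicont u \<longleftrightarrow> (\<forall>t. open {x. t < u x})"

definition Bop :: "'n::finite pt set \<Rightarrow> ('n pt \<Rightarrow> real)
    \<Rightarrow> (real \<Rightarrow> 'n pt \<Rightarrow> ('n pt \<Rightarrow> real) \<Rightarrow> real \<Rightarrow> real)
    \<Rightarrow> real \<Rightarrow> 'n pt \<Rightarrow> ('n pt \<Rightarrow> real) \<Rightarrow> real \<Rightarrow> real" where
  "Bop \<Omega> g A \<rho> x \<phi> s = (if x \<in> \<Omega> then A \<rho> x \<phi> s else s - g x)"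

definition dpp_supersol :: "'n::finite pt set \<Rightarrow> ('n pt \<Rightarrow> real) set \<Rightarrow> ('n pt \<Rightarrow> real)
    \<Rightarrow> (real \<Rightarrow> 'n pt \<Rightarrow> ('n pt \<Rightarrow> real) \<Rightarrow> real \<Rightarrow> real) \<Rightarrow> real \<Rightarrow> ('n pt \<Rightarrow> real) \<Rightarrow> bool" where
  "dpp_supersol \<Omega> X g A \<rho> u \<longleftrightarrow> u \<in> Xbar \<and> (\<forall>x. x \<notin> \<Omega> \<longrightarrow> g x \<le> u x) \<and>
     (\<forall>x\<in>\<Omega>. \<forall>\<phi>\<in>X. (\<forall>y. \<phi> y \<le> u y) \<longrightarrow> 0 \<le> A \<rho> x \<phi> (u x))"

definition dpp_subsol :: "'n::finite pt set \<Rightarrow> ('n pt \<Rightarrow> real) set \<Rightarrow> ('n pt \<Rightarrow> real)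
    \<Rightarrow> (real \<Rightarrow> 'n pt \<Rightarrow> ('n pt \<Rightarrow> real) \<Rightarrow> real \<Rightarrow> real) \<Rightarrow> real \<Rightarrow> ('n pt \<Rightarrow> real) \<Rightarrow> bool" where
  "dpp_subsol \<Omega> X g A \<rho> u \<longleftrightarrow> u \<in> Xbar \<and> (\<forall>x. x \<notin> \<Omega> \<longrightarrow> u x \<le> g x) \<and>
     (\<forall>x\<in>\<Omega>. \<forall>\<phi>\<in>X. (\<forall>y. u y \<le> \<phi> y) \<longrightarrow> A \<rho> x \<phi> (u x) \<le> 0)"

definition dpp_sol where
  "dpp_sol \<Omega> X g A \<rho> u \<longleftrightarrow> dpp_supersol \<Omega> X g A \<rho> u \<and> dpp_subsol \<Omega> X g A \<rho> u"

definition consistent :: "'n::finite pt set \<Rightarrow> ('n pt \<Rightarrow> real)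
    \<Rightarrow> (real \<Rightarrow> 'n pt \<Rightarrow> ('n pt \<Rightarrow> real) \<Rightarrow> real \<Rightarrow> real)
    \<Rightarrow> ('n pt \<Rightarrow> real \<Rightarrow> 'n pt \<Rightarrow> 'n mat \<Rightarrow> real) \<Rightarrow> bool" where
  "consistent \<Omega> g A F \<longleftrightarrow>
    (\<forall>x\<in>closure \<Omega>. \<forall>\<phi>\<in>Cb_inf. \<exists>\<omega>. positive_modulus \<omega> \<and>
      (let lim_sup = Limsup (at_right 0 \<times>\<^sub>F nhds x \<times>\<^sub>F nhds 0)
             (\<lambda>(\<rho>, y, \<xi>). ereal (Bop \<Omega> g A \<rho> y (\<lambda>z. \<phi> z + \<xi>) (\<phi> y + \<xi> + \<omega> \<rho>)));
           lim_inf = Liminf (at_right 0 \<times>\<^sub>F nhds x \<times>\<^sub>F nhds 0)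
             (\<lambda>(\<rho>, y, \<xi>). ereal (Bop \<Omega> g A \<rho> y (\<lambda>z. \<phi> z + \<xi>) (\<phi> y + \<xi> - \<omega> \<rho>)));
           Fu = Fupper \<Omega> F x (\<phi> x) (grad \<phi> x) (hess \<phi> x);
           Fl = Flower \<Omega> F x (\<phi> x) (grad \<phi> x) (hess \<phi> x)
       in (x \<in> \<Omega> \<longrightarrow> lim_sup \<le> Fu \<and> Fl \<le> lim_inf) \<and>
          (x \<in> frontier \<Omega> \<longrightarrow>
             lim_sup \<le> max (ereal (\<phi> x - lstar g x)) Fu \<and>
             min (ereal (\<phi> x - ustar g x)) Fl \<le> lim_inf)))"

definition visc_subsol :: "'n::finite pt set \<Rightarrow> ('n pt \<Rightarrow> real)
    \<Rightarrow> ('n pt \<Rightarrow> real \<Rightarrow> 'n pt \<Rightarrow> 'n mat \<Rightarrow> real) \<Rightarrow> ('n pt \<Rightarrow> real) \<Rightarrow> bool" where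
  "visc_subsol \<Omega> g F u \<longleftrightarrow> u \<in> Xbar \<and>
    (\<forall>\<phi>\<in>Cb_inf. \<forall>x\<in>closure \<Omega>.
       (\<forall>y\<in>closure \<Omega>. ustar u y - \<phi> y \<le> ustar u x - \<phi> x) \<longrightarrow>
       (x \<in> \<Omega> \<longrightarrow> Flower \<Omega> F x (ustar u x) (grad \<phi> x) (hess \<phi> x) \<le> 0) \<and>
       (x \<in> frontier \<Omega> \<longrightarrow>
          min (ereal (ustar u x - ustar g x)) (Flower \<Omega> F x (ustar u x) (grad \<phi> x) (hess \<phi> x)) \<le> 0))"

definition visc_supersol :: "'n::finite pt set \<Rightarrow> ('n pt \<Rightarrow> real)
    \<Rightarrow> ('n pt \<Rightarrow> real \<Rightarrow> 'n pt \<Rightarrow> 'n mat \<Rightarrow> real) \<Rightarrow> ('n pt \<Rightarrow> real) \<Rightarrow> bool" where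
  "visc_supersol \<Omega> g F u \<longleftrightarrow> u \<in> Xbar \<and>
    (\<forall>\<phi>\<in>Cb_inf. \<forall>x\<in>closure \<Omega>.
       (\<forall>y\<in>closure \<Omega>. lstar u x - \<phi> x \<le> lstar u y - \<phi> y) \<longrightarrow>
       (x \<in> \<Omega> \<longrightarrow> 0 \<le> Fupper \<Omega> F x (lstar u x) (grad \<phi> x) (hess \<phi> x)) \<and>
       (x \<in> frontier \<Omega> \<longrightarrow>
          0 \<le> max (ereal (lstar u x - lstar g x)) (Fupper \<Omega> F x (lstar u x) (grad \<phi> x) (hess \<phi> x))))"

definition ubar :: "(real \<Rightarrow> 'n::finite pt \<Rightarrow> real) \<Rightarrow> 'n pt \<Rightarrow> real" where
  "ubar u x = real_of_ereal (Limsup (at_right 0 \<times>\<^sub>F nhds x) (\<lambda>(\<rho>, y). ereal (u \<rho> y)))"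

definition ulow :: "(real \<Rightarrow> 'n::finite pt \<Rightarrow> real) \<Rightarrow> 'n pt \<Rightarrow> real" where
  "ulow u x = real_of_ereal (Liminf (at_right 0 \<times>\<^sub>F nhds x) (\<lambda>(\<rho>, y). ereal (u \<rho> y)))"

end

theory Submission
  imports Defs
begin


inductive_set Cls :: "('n::finite pt \<Rightarrow> real) set" where
  Cconst: "(\<lambda>z. c) \<in> Cls"
| Ctanh: "(\<lambda>z. tanh (z$j - a)) \<in> Cls"
| Cadd: "f \<in> Cls \<Longrightarrow> g \<in> Cls \<Longrightarrow> (\<lambda>z. f z + g z) \<in> Cls"
| Cmult: "f \<in> Cls \<Longrightarrow> g \<in> Cls \<Longrightarrow> (\<lambda>z. f z * g z) \<in> Cls"

lemma tanh_hasderiv: "(tanh has_derivative (\<lambda>y. (1 - tanh w ^ 2) * y)) (at (w::real))"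
proof -
  have "cosh w \<noteq> 0" using cosh_real_pos[of w] by simp
  then have "((\<lambda>x. tanh x) has_field_derivative (1 - tanh w ^ 2) * 1) (at w)"
    by (intro has_field_derivative_tanh DERIV_ident)
  then show ?thesis by (simp add: has_field_derivative_def)
qed

lemma Cls_bounded: "f \<in> Cls \<Longrightarrow> \<exists>B. \<forall>z. \<bar>f z\<bar> \<le> B"
proof (induction rule: Cls.induct)
  case (Cconst c) then show ?case by auto
next
  case (Ctanh j a) then show ?case
    by (rule exI[of _ 1]) (metis tanh_real_bounds greaterThanLessThan_iff abs_le_iff less_le_not_le linorder_linear minus_less_iff)
next
  case (Cadd f g) then obtain B1 B2 where "\<forall>z. \<bar>f z\<bar> \<le> B1" "\<forall>z. \<bar>g z\<bar> \<le> B2" by blast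
  then show ?case by (intro exI[of _ "B1+B2"] allI) (metis abs_triangle_ineq add_mono order_trans)
next
  case (Cmult f g) then obtain B1 B2 where b: "\<forall>z. \<bar>f z\<bar> \<le> B1" "\<forall>z. \<bar>g z\<bar> \<le> B2" by blast
  show ?case
  proof (intro exI allI)
    fix z show "\<bar>f z * g z\<bar> \<le> B1 * B2" unfolding abs_mult
      using b by (intro mult_mono) auto
  qed
qed

lemma Cls_deriv: "f \<in> Cls \<Longrightarrow> \<exists>D. (\<forall>i. D i \<in> Cls) \<and> (\<forall>z. (f has_derivative (\<lambda>h. \<Sum>k\<in>UNIV. h$k * D k z)) (at z))"
proof (induction rule: Cls.induct)
  case (Cconst c)
  show ?case by (rule exI[of _ "\<lambda>i z. 0"]) (auto intro: Cls.Cconst)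
next
  case (Ctanh j a)
  let ?D = "\<lambda>i (z::'a pt). if i = j then 1 + (-1) * (tanh (z$j - a) * tanh (z$j - a)) else 0"
  have "\<forall>i. ?D i \<in> Cls"
  proof
    fix i show "?D i \<in> Cls"
    proof (cases "i = j")
      case True then show ?thesis
        using Cls.Cadd[OF Cls.Cconst Cls.Cmult[OF Cls.Cconst Cls.Cmult[OF Cls.Ctanh Cls.Ctanh]], of 1 "-1" j a j a]
        by simp
    qed (simp add: Cls.Cconst)
  qed
  moreover have "((\<lambda>z. tanh (z$j - a)) has_derivative (\<lambda>h. \<Sum>k\<in>UNIV. h$k * ?D k z)) (at z)" for z :: "'a pt"
  proof -
    have l: "((\<lambda>z::'a pt. z$j - a) has_derivative (\<lambda>h. h$j)) (at z)"
      using bounded_linear_imp_has_derivative[OF bounded_linear_vec_nth[of j]]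
      by (auto intro!: derivative_eq_intros)
    have "((tanh \<circ> (\<lambda>z::'a pt. z$j - a)) has_derivative ((\<lambda>y. (1 - tanh (z$j - a) ^ 2) * y) \<circ> (\<lambda>h. h$j))) (at z)"
      by (rule diff_chain_at[OF l tanh_hasderiv])
    moreover have "((\<lambda>y. (1 - tanh (z$j - a) ^ 2) * y) \<circ> (\<lambda>h. h$j)) = (\<lambda>h. \<Sum>k\<in>UNIV. h$k * ?D k z)"
      by (auto simp: fun_eq_iff if_distrib power2_eq_square cong: if_cong)
    ultimately show ?thesis by (simp add: comp_def)
  qed
  ultimately show ?case by (intro exI[of _ ?D]) blast
next
  case (Cadd f g)
  then obtain Df Dg where f: "\<forall>i. Df i \<in> Cls" "\<forall>z. (f has_derivative (\<lambda>h. \<Sum>k\<in>UNIV. h$k * Df k z)) (at z)"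
    and g: "\<forall>i. Dg i \<in> Cls" "\<forall>z. (g has_derivative (\<lambda>h. \<Sum>k\<in>UNIV. h$k * Dg k z)) (at z)" by blast
  show ?case
  proof (intro exI conjI allI)
    fix i show "(\<lambda>z. Df i z + Dg i z) \<in> Cls" using f g by (auto intro: Cls.intros)
  next
    fix z
    have "((\<lambda>z. f z + g z) has_derivative (\<lambda>h. (\<Sum>k\<in>UNIV. h$k * Df k z) + (\<Sum>k\<in>UNIV. h$k * Dg k z))) (at z)"
      using f g by (intro has_derivative_add) auto
    then show "((\<lambda>z. f z + g z) has_derivative (\<lambda>h. \<Sum>k\<in>UNIV. h$k * (Df k z + Dg k z))) (at z)"
      by (simp add: distrib_left sum.distrib)
  qed
next
  case (Cmult f g)
  then obtain Df Dg where f: "\<forall>i. Df i \<in> Cls" "\<forall>z. (f has_derivative (\<lambda>h. \<Sum>k\<in>UNIV. h$k * Df k z)) (at z)"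
    and g: "\<forall>i. Dg i \<in> Cls" "\<forall>z. (g has_derivative (\<lambda>h. \<Sum>k\<in>UNIV. h$k * Dg k z)) (at z)" by blast
  show ?case
  proof (intro exI conjI allI)
    fix i show "(\<lambda>z. f z * Dg i z + Df i z * g z) \<in> Cls" using f(1) g(1) Cmult.hyps by (intro Cls.Cadd Cls.Cmult) auto
  next
    fix z
    have "((\<lambda>z. f z * g z) has_derivative (\<lambda>h. f z * (\<Sum>k\<in>UNIV. h$k * Dg k z) + (\<Sum>k\<in>UNIV. h$k * Df k z) * g z)) (at z)"
      using f g by (intro has_derivative_mult) auto
    then show "((\<lambda>z. f z * g z) has_derivative (\<lambda>h. \<Sum>k\<in>UNIV. h$k * (f z * Dg k z + Df k z * g z))) (at z)"
      by (simp add: distrib_left sum.distrib sum_distrib_left sum_distrib_right algebra_simps)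
  qed
qed

lemma partial_hasderiv:
  assumes "(f has_derivative f') (at x)"
  shows "partial i f x = f' (axis i 1)"
proof -
  have l: "((\<lambda>t::real. x + t *\<^sub>R axis i 1) has_derivative (\<lambda>t. t *\<^sub>R axis i 1)) (at 0)"
    by (auto intro!: derivative_eq_intros)
  have "((f \<circ> (\<lambda>t::real. x + t *\<^sub>R axis i 1)) has_derivative (f' \<circ> (\<lambda>t. t *\<^sub>R axis i 1))) (at 0)"
    by (rule diff_chain_at[OF l]) (simp add: assms)
  moreover have "(f' \<circ> (\<lambda>t. t *\<^sub>R axis i 1)) = (\<lambda>t. f' (axis i 1) * t)"
    using has_derivative_bounded_linear[OF assms] by (auto simp: fun_eq_iff linear_simps bounded_linear.linear mult.commute)
  ultimately have "((\<lambda>t. f (x + t *\<^sub>R axis i 1)) has_field_derivative f' (axis i 1)) (at 0)"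
    by (simp add: has_field_derivative_def comp_def)
  then show ?thesis unfolding partial_def by (rule DERIV_imp_deriv)
qed

lemma partial_add:
  assumes "f differentiable (at x)" "g differentiable (at x)"
  shows "partial i (\<lambda>z. f z + g z) x = partial i f x + partial i g x"
proof -
  obtain f' g' where f: "(f has_derivative f') (at x)" and g: "(g has_derivative g') (at x)"
    using assms unfolding differentiable_def by blast
  have "((\<lambda>z. f z + g z) has_derivative (\<lambda>h. f' h + g' h)) (at x)"
    using f g by (rule has_derivative_add)
  then show ?thesis using partial_hasderiv[OF f] partial_hasderiv[OF g] partial_hasderiv by metis
qed

lemma Cls_partial: "b \<in> Cls \<Longrightarrow> partial i b \<in> Cls"
proof -
  assume "b \<in> Cls"
  then obtain D where D: "\<forall>i. D i \<in> Cls" "\<forall>z. (b has_derivative (\<lambda>h. \<Sum>k\<in>UNIV. h$k * D k z)) (at z)"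
    using Cls_deriv by blast
  have "partial i b = D i"
  proof
    fix z show "partial i b z = D i z"
      using partial_hasderiv[OF D(2)[rule_format, of z], of i] by (simp add: axis_def if_distrib[of "\<lambda>x. x * _"] cong: if_cong)
  qed
  then show ?thesis using D by simp
qed

lemma Cls_differentiable: "b \<in> Cls \<Longrightarrow> b differentiable (at z)"
  using Cls_deriv unfolding differentiable_def by blast

lemma Cls_ipartial: "b \<in> Cls \<Longrightarrow> ipartial is b \<in> Cls"
  by (induction "is") (auto intro: Cls_partial)

lemma Cls_sum: "finite S \<Longrightarrow> (\<forall>j\<in>S. f j \<in> Cls) \<Longrightarrow> (\<lambda>z. \<Sum>j\<in>S. f j z) \<in> Cls"
proof (induction S rule: finite_induct)
  case empty then show ?case using Cls.Cconst[of 0] by simp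
next
  case (insert x F) then show ?case using Cls.Cadd[of "f x" "\<lambda>z. \<Sum>j\<in>F. f j z"] by simp
qed

lemma Cb_plus_ipartial:
  assumes "\<phi> \<in> Cb_inf" "b \<in> Cls"
  shows "ipartial is (\<lambda>z. \<phi> z + b z) = (\<lambda>z. ipartial is \<phi> z + ipartial is b z)"
proof (induction "is")
  case Nil then show ?case by simp
next
  case (Cons i "is")
  have "ipartial (i # is) (\<lambda>z. \<phi> z + b z) = partial i (\<lambda>z. ipartial is \<phi> z + ipartial is b z)"
    using Cons by simp
  also have "\<dots> = (\<lambda>z. partial i (ipartial is \<phi>) z + partial i (ipartial is b) z)"
  proof
    fix z
    show "partial i (\<lambda>z. ipartial is \<phi> z + ipartial is b z) z = partial i (ipartial is \<phi>) z + partial i (ipartial is b) z"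
      using assms(1) Cls_differentiable[OF Cls_ipartial[OF assms(2)]] unfolding Cb_inf_def
      by (intro partial_add) auto
  qed
  finally show ?case by simp
qed

lemma Cb_plus: assumes "\<phi> \<in> Cb_inf" "b \<in> Cls" shows "(\<lambda>z. \<phi> z + b z) \<in> Cb_inf"
  unfolding Cb_inf_def
proof (intro CollectI allI conjI)
  fix "is" :: "'a list" and x
  have d1: "ipartial is \<phi> differentiable (at x)" using assms(1) unfolding Cb_inf_def by blast
  have d2: "ipartial is b differentiable (at x)" using Cls_differentiable[OF Cls_ipartial[OF assms(2)]] .
  show "ipartial is (\<lambda>z. \<phi> z + b z) differentiable (at x)"
    unfolding Cb_plus_ipartial[OF assms] using d1 d2 by (rule differentiable_add)
next
  fix "is" :: "'a list"
  have "bounded (range (ipartial is \<phi>))" using assms(1) unfolding Cb_inf_def by blast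
  then obtain B1 where B1: "\<forall>z. \<bar>ipartial is \<phi> z\<bar> \<le> B1" unfolding bounded_iff by auto
  obtain B2 where B2: "\<forall>z. \<bar>ipartial is b z\<bar> \<le> B2" using Cls_bounded[OF Cls_ipartial[OF assms(2)]] by blast
  show "bounded (range (ipartial is (\<lambda>z. \<phi> z + b z)))"
    unfolding Cb_plus_ipartial[OF assms] bounded_iff
    using B1 B2 by (intro exI[of _ "B1+B2"]) (auto intro: order_trans[OF abs_triangle_ineq] add_mono)
qed

lemma coord_hasderiv:
  assumes "(q has_real_derivative d) (at (z$j - c))"
  shows "((\<lambda>z::'n::finite pt. q (z$j - c)) has_derivative (\<lambda>h. d * h$j)) (at z)"
proof -
  have l: "((\<lambda>z::'n pt. z$j - c) has_derivative (\<lambda>h. h$j)) (at z)"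
    using bounded_linear_imp_has_derivative[OF bounded_linear_vec_nth[of j]]
    by (auto intro!: derivative_eq_intros)
  have "((q \<circ> (\<lambda>z::'n pt. z$j - c)) has_derivative ((\<lambda>y. d * y) \<circ> (\<lambda>h. h$j))) (at z)"
    by (rule diff_chain_at[OF l]) (use assms in \<open>simp add: has_field_derivative_def\<close>)
  then show ?thesis by (simp add: comp_def)
qed

lemma partial_coord:
  assumes "(q has_real_derivative d) (at (z$j - c))"
  shows "partial i (\<lambda>z::'n::finite pt. K * q (z$j - c)) z = (if i = j then K * d else 0)"
proof -
  have "((\<lambda>z::'n::finite pt. K * q (z$j - c)) has_derivative (\<lambda>h. K * (d * h$j))) (at z)"
    using coord_hasderiv[OF assms] by (intro has_derivative_mult_right)
  from partial_hasderiv[OF this] show ?thesis by (simp add: axis_def)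
qed

lemma partial_coordsum:
  assumes "\<And>t. (q has_real_derivative q' t) (at t)"
  shows "partial i (\<lambda>z::'n::finite pt. K * (\<Sum>j\<in>UNIV. q (z$j - a$j))) z = K * q' (z$i - a$i)"
proof -
  have "((\<lambda>z::'n::finite pt. K * (\<Sum>j\<in>UNIV. q (z$j - a$j))) has_derivative (\<lambda>h. K * (\<Sum>j\<in>UNIV. q' (z$j - a$j) * h$j))) (at z)"
    using coord_hasderiv[OF assms] by (intro has_derivative_mult_right has_derivative_sum) auto
  from partial_hasderiv[OF this] show ?thesis by (simp add: axis_def if_distrib cong: if_cong)
qed

definition bump :: "real \<Rightarrow> 'n::finite pt \<Rightarrow> 'n pt \<Rightarrow> real" where
  "bump K x0 z = K * (\<Sum>j\<in>UNIV. tanh (z$j - x0$j) ^ 4)"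

lemma bump_Cls: fixes x0 :: "'n::finite pt" shows "bump K x0 \<in> Cls"
proof -
  have t: "(\<lambda>z::'n pt. tanh (z$j - x0$j) ^ 4) \<in> Cls" for j
    using Cls.Cmult[OF Cls.Cmult[OF Cls.Cmult[OF Cls.Ctanh Cls.Ctanh] Cls.Ctanh] Cls.Ctanh, of j "x0$j" j "x0$j" j "x0$j" j "x0$j"]
    by (simp add: power4_eq_xxxx mult.assoc)
  have "(\<lambda>z::'n pt. \<Sum>j\<in>UNIV. tanh (z$j - x0$j) ^ 4) \<in> Cls"
    using Cls_sum[of UNIV "\<lambda>j z. tanh (z$j - x0$j) ^ 4"] t by simp
  from Cls.Cmult[OF Cls.Cconst this, of K] show ?thesis unfolding bump_def[abs_def] .
qed

lemma bump_nonneg: "0 \<le> K \<Longrightarrow> 0 \<le> bump K x0 z"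
  unfolding bump_def by (intro mult_nonneg_nonneg sum_nonneg) (auto simp: zero_le_even_power)

lemma bump_x0: "bump K x0 x0 = 0"
  unfolding bump_def by simp

lemma bump_far:
  fixes x0 z :: "'n::finite pt"
  assumes K: "0 \<le> K" and s: "0 < s" and far: "s \<le> dist x0 z"
  shows "K * tanh (s / CARD('n)) ^ 4 \<le> bump K x0 z"
proof -
  have "\<exists>i. s / CARD('n) \<le> \<bar>z$i - x0$i\<bar>"
  proof (rule ccontr)
    assume "\<not> ?thesis"
    then have lt: "\<And>i. \<bar>z$i - x0$i\<bar> < s / CARD('n)" by (simp add: not_le)
    have "dist x0 z = norm (z - x0)" by (simp add: dist_norm norm_minus_commute)
    also have "\<dots> \<le> (\<Sum>i\<in>UNIV. \<bar>(z - x0)$i\<bar>)" by (rule norm_le_l1_cart)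
    also have "\<dots> < (\<Sum>i\<in>(UNIV::'n set). s / CARD('n))"
      apply (rule sum_strict_mono)
      using lt by auto
    also have "\<dots> = s" by simp
    finally show False using far by simp
  qed
  then obtain i where i: "s / CARD('n) \<le> \<bar>z$i - x0$i\<bar>" by blast
  have "tanh (s / CARD('n)) ^ 4 \<le> tanh \<bar>z$i - x0$i\<bar> ^ 4"
    using i s by (intro power_mono) (auto simp del: tanh_real_abs)
  also have "\<dots> = tanh (z$i - x0$i) ^ 4"
    by (simp add: power_even_abs_numeral)
  also have "\<dots> \<le> (\<Sum>j\<in>UNIV. tanh (z$j - x0$j) ^ 4)"
    by (rule member_le_sum) (auto simp: zero_le_even_power)
  finally show ?thesis unfolding bump_def using K by (simp add: mult_left_mono)
qed

definition q1 :: "real \<Rightarrow> real" where "q1 t = 4 * tanh t ^ 3 * (1 - tanh t ^ 2)"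

lemma q0_deriv: "((\<lambda>t. tanh t ^ 4) has_real_derivative q1 t) (at t)"
proof -
  have "cosh t \<noteq> 0" using cosh_real_pos[of t] by simp
  then show ?thesis unfolding q1_def
    by (auto intro!: derivative_eq_intros simp: algebra_simps)
qed

lemma q1_deriv0: "(q1 has_real_derivative 0) (at 0)"
  unfolding q1_def[abs_def] by (auto intro!: derivative_eq_intros)

lemma partial_bump: "partial i (bump K x0) z = K * q1 (z$i - x0$i)"
  unfolding bump_def[abs_def] by (rule partial_coordsum[OF q0_deriv])

lemma partial_const: "partial i (\<lambda>z::'n::finite pt. c) x = 0"
  using partial_hasderiv[OF has_derivative_const[of c "at x"], of i] by simp

lemma grad_hess_pert:
  fixes \<phi> :: "'n::finite pt \<Rightarrow> real"
  assumes "\<phi> \<in> Cb_inf"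
  shows "grad (\<lambda>z. \<phi> z + (c + bump K x0 z)) x0 = grad \<phi> x0"
    and "hess (\<lambda>z. \<phi> z + (c + bump K x0 z)) x0 = hess \<phi> x0"
proof -
  have bC: "(\<lambda>z. c + bump K x0 z) \<in> Cls" using Cls.Cadd[OF Cls.Cconst bump_Cls] .
  have phid: "\<And>is x. ipartial is \<phi> differentiable (at x)" using assms unfolding Cb_inf_def by blast
  have pb: "partial j (\<lambda>z. c + bump K x0 z) z = K * q1 (z$j - x0$j)" for j z
  proof -
    have "partial j (\<lambda>z. c + bump K x0 z) z = partial j (\<lambda>z. c) z + partial j (bump K x0) z"
      by (rule partial_add) (auto intro: Cls_differentiable bump_Cls)
    then show ?thesis by (simp add: partial_const partial_bump)
  qed
  have p1: "partial j (\<lambda>z. \<phi> z + (c + bump K x0 z)) = (\<lambda>z. partial j \<phi> z + K * q1 (z$j - x0$j))" for j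
  proof
    fix z show "partial j (\<lambda>z. \<phi> z + (c + bump K x0 z)) z = partial j \<phi> z + K * q1 (z$j - x0$j)"
      using partial_add[of \<phi> z "\<lambda>z. c + bump K x0 z" j] phid[of "[]"] Cls_differentiable[OF bC] pb by simp
  qed
  show "grad (\<lambda>z. \<phi> z + (c + bump K x0 z)) x0 = grad \<phi> x0"
    unfolding grad_def p1 by (simp add: q1_def)
  have q1d: "(\<lambda>z. K * q1 (z$j - x0$j)) differentiable (at z)" for j z
  proof -
    have "(\<lambda>z. K * q1 (z$j - x0$j)) = partial j (\<lambda>z. c + bump K x0 z)" using pb by auto
    then show ?thesis using Cls_differentiable[OF Cls_partial[OF bC]] by metis
  qed
  have "partial i (\<lambda>z. partial j \<phi> z + K * q1 (z$j - x0$j)) x0 = partial i (partial j \<phi>) x0" for i j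
    using partial_add[of "partial j \<phi>" x0 "\<lambda>z. K * q1 (z$j - x0$j)" i] phid[of "[j]"] q1d
      partial_coord[of q1 0 x0 j "x0$j" i K] q1_deriv0 by simp
  then show "hess (\<lambda>z. \<phi> z + (c + bump K x0 z)) x0 = hess \<phi> x0"
    unfolding hess_def p1 by simp
qed

lemma diff_cont_ev:
  fixes f :: "'a::real_normed_vector \<Rightarrow> real"
  assumes "f differentiable (at x)" "0 < e"
  shows "eventually (\<lambda>w. \<bar>f w - f x\<bar> < e) (nhds x)"
proof -
  have "continuous (at x) f" using assms(1) by (rule differentiable_imp_continuous_within)
  then have "(f \<longlongrightarrow> f x) (at x)" by (simp add: continuous_at)
  then have "eventually (\<lambda>w. dist (f w) (f x) < e) (at x)" using assms(2) by (rule tendstoD)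
  then show ?thesis unfolding eventually_nhds_conv_at using assms(2) by (simp add: dist_real_def)
qed

lemma less_Limsup_frequently:
  fixes f :: "_ \<Rightarrow> 'b::complete_linorder"
  assumes "c < Limsup F f" shows "frequently (\<lambda>x. c < f x) F"
proof (rule ccontr)
  assume "\<not> ?thesis"
  then have "eventually (\<lambda>x. f x \<le> c) F" by (simp add: not_frequently not_less)
  then have "Limsup F f \<le> c" by (rule Limsup_bounded)
  then show False using assms by simp
qed

lemma Liminf_less_frequently:
  fixes f :: "_ \<Rightarrow> 'b::complete_linorder"
  assumes "Liminf F f < c" shows "frequently (\<lambda>x. f x < c) F"
proof (rule ccontr)
  assume "\<not> ?thesis"
  then have "eventually (\<lambda>x. c \<le> f x) F" by (simp add: not_frequently not_less)
  then have "c \<le> Liminf F f" by (rule Liminf_bounded)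
  then show False using assms by simp
qed

lemma prod_ne_bot: "at_right (0::real) \<times>\<^sub>F nhds (x::'a::topological_space) \<noteq> bot"
  by (simp add: prod_filter_eq_bot nhds_neq_bot)

lemma ev_pos: "eventually (\<lambda>(\<rho>::real, y::'a::topological_space). 0 < \<rho>) (at_right 0 \<times>\<^sub>F nhds x)"
  unfolding eventually_prod_filter
  by (intro exI[of _ "\<lambda>\<rho>. 0 < \<rho>"] exI[of _ "\<lambda>_. True"]) (auto simp: eventually_at_right_less)

lemma ev_fst: "eventually P (at_right (0::real)) \<Longrightarrow> eventually (\<lambda>(\<rho>, y). P \<rho>) (at_right 0 \<times>\<^sub>F nhds (x::'a::topological_space))"
  unfolding eventually_prod_filter
  by (intro exI[of _ P] exI[of _ "\<lambda>_. True"]) auto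

lemma ev_snd: "eventually P (nhds x) \<Longrightarrow> eventually (\<lambda>(\<rho>, y). P y) (at_right (0::real) \<times>\<^sub>F nhds (x::'a::topological_space))"
  unfolding eventually_prod_filter
  by (intro exI[of _ "\<lambda>_. True"] exI[of _ P]) auto

lemma LS_bounds:
  fixes u :: "real \<Rightarrow> 'a::topological_space \<Rightarrow> real"
  assumes C: "\<forall>\<rho>>0. \<forall>x. \<bar>u \<rho> x\<bar> \<le> C"
  shows "Limsup (at_right 0 \<times>\<^sub>F nhds x) (\<lambda>(\<rho>, y). ereal (u \<rho> y)) \<le> ereal C"
    and "ereal (-C) \<le> Liminf (at_right 0 \<times>\<^sub>F nhds x) (\<lambda>(\<rho>, y). ereal (u \<rho> y))"
    and "Liminf (at_right 0 \<times>\<^sub>F nhds x) (\<lambda>(\<rho>, y). ereal (u \<rho> y)) \<le> Limsup (at_right 0 \<times>\<^sub>F nhds x) (\<lambda>(\<rho>, y). ereal (u \<rho> y))"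
proof -
  have ev: "eventually (\<lambda>(\<rho>, y). \<bar>u \<rho> y\<bar> \<le> C) (at_right 0 \<times>\<^sub>F nhds x)"
    using ev_pos[of x] by (rule eventually_mono) (use C in auto)
  show "Limsup (at_right 0 \<times>\<^sub>F nhds x) (\<lambda>(\<rho>, y). ereal (u \<rho> y)) \<le> ereal C"
    by (rule Limsup_bounded) (use ev in \<open>rule eventually_mono, auto\<close>)
  show "ereal (-C) \<le> Liminf (at_right 0 \<times>\<^sub>F nhds x) (\<lambda>(\<rho>, y). ereal (u \<rho> y))"
    by (rule Liminf_bounded) (use ev in \<open>rule eventually_mono, auto\<close>)
  show "Liminf (at_right 0 \<times>\<^sub>F nhds x) (\<lambda>(\<rho>, y). ereal (u \<rho> y)) \<le> Limsup (at_right 0 \<times>\<^sub>F nhds x) (\<lambda>(\<rho>, y). ereal (u \<rho> y))"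
    by (rule Liminf_le_Limsup[OF prod_ne_bot])
qed

lemma ubar_eq:
  assumes C: "\<forall>\<rho>>0. \<forall>x. \<bar>u \<rho> x\<bar> \<le> C"
  shows "ereal (ubar u x) = Limsup (at_right 0 \<times>\<^sub>F nhds x) (\<lambda>(\<rho>, y). ereal (u \<rho> y))"
proof -
  note b = LS_bounds[OF C, of x]
  have "\<bar>Limsup (at_right 0 \<times>\<^sub>F nhds x) (\<lambda>(\<rho>, y). ereal (u \<rho> y))\<bar> \<noteq> \<infinity>"
    using b by (cases "Limsup (at_right 0 \<times>\<^sub>F nhds x) (\<lambda>(\<rho>, y). ereal (u \<rho> y))") auto
  then show ?thesis unfolding ubar_def by (rule ereal_real')
qed

lemma ulow_eq:
  assumes C: "\<forall>\<rho>>0. \<forall>x. \<bar>u \<rho> x\<bar> \<le> C"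
  shows "ereal (ulow u x) = Liminf (at_right 0 \<times>\<^sub>F nhds x) (\<lambda>(\<rho>, y). ereal (u \<rho> y))"
proof -
  note b = LS_bounds[OF C, of x]
  have "\<bar>Liminf (at_right 0 \<times>\<^sub>F nhds x) (\<lambda>(\<rho>, y). ereal (u \<rho> y))\<bar> \<noteq> \<infinity>"
    using b by (cases "Liminf (at_right 0 \<times>\<^sub>F nhds x) (\<lambda>(\<rho>, y). ereal (u \<rho> y))") auto
  then show ?thesis unfolding ulow_def by (rule ereal_real')
qed

lemma ubar_bounded:
  assumes C: "\<forall>\<rho>>0. \<forall>x. \<bar>u \<rho> x\<bar> \<le> C"
  shows "\<bar>ubar u x\<bar> \<le> C" "\<bar>ulow u x\<bar> \<le> C"
proof -
  note b = LS_bounds[OF C, of x]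
  have 1: "ereal (-C) \<le> ereal (ulow u x)" "ereal (ulow u x) \<le> ereal (ubar u x)" "ereal (ubar u x) \<le> ereal C"
    using b ubar_eq[OF C, of x] ulow_eq[OF C, of x] by auto
  then have "-C \<le> ulow u x" "ulow u x \<le> ubar u x" "ubar u x \<le> C" by simp_all
  then show "\<bar>ubar u x\<bar> \<le> C" "\<bar>ulow u x\<bar> \<le> C" by auto
qed

lemma ubar_usc:
  fixes u :: "real \<Rightarrow> 'n::finite pt \<Rightarrow> real"
  assumes C: "\<forall>\<rho>>0. \<forall>x. \<bar>u \<rho> x\<bar> \<le> C"
  shows "upper_semicont (ubar u)"
  unfolding upper_semicont_def
proof (intro allI, subst open_subopen, intro ballI)
  fix t x assume "x \<in> {x. ubar u x < t}"
  then have lt: "ubar u x < t" by simp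
  define t' where "t' = (ubar u x + t) / 2"
  have "Limsup (at_right 0 \<times>\<^sub>F nhds x) (\<lambda>(\<rho>, y). ereal (u \<rho> y)) < ereal t'"
    unfolding ubar_eq[OF C, symmetric] using lt by (simp add: t'_def)
  from Limsup_lessD[OF this] obtain Pf Pg where
    P: "eventually Pf (at_right 0)" "eventually Pg (nhds x)" "\<forall>\<rho> y. Pf \<rho> \<longrightarrow> Pg y \<longrightarrow> u \<rho> y < t'"
    unfolding eventually_prod_filter by auto
  from P(2) obtain S where S: "open S" "x \<in> S" "\<forall>y\<in>S. Pg y" unfolding eventually_nhds by auto
  show "\<exists>T. open T \<and> x \<in> T \<and> T \<subseteq> {x. ubar u x < t}"
  proof (intro exI[of _ S] conjI)
    show "S \<subseteq> {x. ubar u x < t}"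
    proof
      fix x' assume "x' \<in> S"
      have "eventually (\<lambda>(\<rho>, y). ereal (u \<rho> y) \<le> ereal t') (at_right 0 \<times>\<^sub>F nhds x')"
        unfolding eventually_prod_filter
      proof (intro exI conjI)
        show "eventually Pf (at_right 0)" by fact
        show "eventually (\<lambda>y. y \<in> S) (nhds x')" using S \<open>x' \<in> S\<close> eventually_nhds by blast
      qed (use P S in \<open>auto intro: less_imp_le\<close>)
      then have "Limsup (at_right 0 \<times>\<^sub>F nhds x') (\<lambda>(\<rho>, y). ereal (u \<rho> y)) \<le> ereal t'"
        by (intro Limsup_bounded) (auto elim: eventually_mono)
      then have "ubar u x' \<le> t'" unfolding ubar_eq[OF C, symmetric] by simp
      then show "x' \<in> {x. ubar u x < t}" using lt by (simp add: t'_def)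
    qed
  qed (use S in auto)
qed

lemma ulow_lsc:
  fixes u :: "real \<Rightarrow> 'n::finite pt \<Rightarrow> real"
  assumes C: "\<forall>\<rho>>0. \<forall>x. \<bar>u \<rho> x\<bar> \<le> C"
  shows "lower_semicont (ulow u)"
  unfolding lower_semicont_def
proof (intro allI, subst open_subopen, intro ballI)
  fix t x assume "x \<in> {x. t < ulow u x}"
  then have lt: "t < ulow u x" by simp
  define t' where "t' = (ulow u x + t) / 2"
  have "ereal t' < Liminf (at_right 0 \<times>\<^sub>F nhds x) (\<lambda>(\<rho>, y). ereal (u \<rho> y))"
    unfolding ulow_eq[OF C, symmetric] using lt by (simp add: t'_def)
  from less_LiminfD[OF this] obtain Pf Pg where
    P: "eventually Pf (at_right 0)" "eventually Pg (nhds x)" "\<forall>\<rho> y. Pf \<rho> \<longrightarrow> Pg y \<longrightarrow> t' < u \<rho> y"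
    unfolding eventually_prod_filter by auto
  from P(2) obtain S where S: "open S" "x \<in> S" "\<forall>y\<in>S. Pg y" unfolding eventually_nhds by auto
  show "\<exists>T. open T \<and> x \<in> T \<and> T \<subseteq> {x. t < ulow u x}"
  proof (intro exI[of _ S] conjI)
    show "S \<subseteq> {x. t < ulow u x}"
    proof
      fix x' assume "x' \<in> S"
      have "eventually (\<lambda>(\<rho>, y). ereal t' \<le> ereal (u \<rho> y)) (at_right 0 \<times>\<^sub>F nhds x')"
        unfolding eventually_prod_filter
      proof (intro exI conjI)
        show "eventually Pf (at_right 0)" by fact
        show "eventually (\<lambda>y. y \<in> S) (nhds x')" using S \<open>x' \<in> S\<close> eventually_nhds by blast
      qed (use P S in \<open>auto intro: less_imp_le\<close>)
      then have "ereal t' \<le> Liminf (at_right 0 \<times>\<^sub>F nhds x') (\<lambda>(\<rho>, y). ereal (u \<rho> y))"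
        by (intro Liminf_bounded) (auto elim: eventually_mono)
      then have "t' \<le> ulow u x'" unfolding ulow_eq[OF C, symmetric] by simp
      then show "x' \<in> {x. t < ulow u x}" using lt by (simp add: t'_def)
    qed
  qed (use S in auto)
qed

lemma ustar_usc:
  fixes v :: "'n::finite pt \<Rightarrow> real"
  assumes "upper_semicont v" shows "ustar v x = v x"
proof -
  have le: "Limsup (nhds x) (\<lambda>y. ereal (v y)) \<le> ereal (v x)"
    unfolding Limsup_le_iff
  proof (intro allI impI)
    fix y assume "ereal (v x) < y"
    then obtain t where t: "ereal (v x) < ereal t" "ereal t < y" using ereal_dense2 by blast
    have "open {w. v w < t}" using assms unfolding upper_semicont_def by blast
    moreover have "x \<in> {w. v w < t}" using t by simp
    ultimately have "eventually (\<lambda>w. w \<in> {w. v w < t}) (nhds x)" by (rule eventually_nhds_in_open)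
    then show "eventually (\<lambda>w. ereal (v w) < y) (nhds x)"
    proof (rule eventually_mono)
      fix w assume "w \<in> {w. v w < t}"
      then have "ereal (v w) < ereal t" by simp
      then show "ereal (v w) < y" using t(2) by (rule less_trans)
    qed
  qed
  have ge: "ereal (v x) \<le> Limsup (nhds x) (\<lambda>y. ereal (v y))"
  proof (rule ccontr)
    assume "\<not> ?thesis"
    then have "Limsup (nhds x) (\<lambda>y. ereal (v y)) < ereal (v x)" by simp
    from eventually_nhds_x_imp_x[OF Limsup_lessD[OF this]] show False by simp
  qed
  show ?thesis unfolding ustar_def usc_env_def using le ge by simp
qed

lemma lstar_lsc:
  fixes v :: "'n::finite pt \<Rightarrow> real"
  assumes "lower_semicont v" shows "lstar v x = v x"
proof -
  have le: "ereal (v x) \<le> Liminf (nhds x) (\<lambda>y. ereal (v y))"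
    unfolding le_Liminf_iff
  proof (intro allI impI)
    fix y assume "y < ereal (v x)"
    then obtain t where t: "y < ereal t" "ereal t < ereal (v x)" using ereal_dense2 by blast
    have "open {w. t < v w}" using assms unfolding lower_semicont_def by blast
    moreover have "x \<in> {w. t < v w}" using t by simp
    ultimately have "eventually (\<lambda>w. w \<in> {w. t < v w}) (nhds x)" by (rule eventually_nhds_in_open)
    then show "eventually (\<lambda>w. y < ereal (v w)) (nhds x)"
    proof (rule eventually_mono)
      fix w assume "w \<in> {w. t < v w}"
      then have "ereal t < ereal (v w)" by simp
      with t(1) show "y < ereal (v w)" by (rule less_trans)
    qed
  qed
  have ge: "Liminf (nhds x) (\<lambda>y. ereal (v y)) \<le> ereal (v x)"
  proof (rule ccontr)
    assume "\<not> ?thesis"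
    then have "ereal (v x) < Liminf (nhds x) (\<lambda>y. ereal (v y))" by simp
    from eventually_nhds_x_imp_x[OF less_LiminfD[OF this]] show False by simp
  qed
  have eq: "Liminf (nhds x) (\<lambda>y. ereal (v y)) = ereal (v x)" using le ge by (rule antisym[rotated])
  show ?thesis unfolding lstar_def lsc_env_def using eq by simp
qed

lemma compact_eventually:
  assumes "compact S"
    and "\<forall>z\<in>S. \<exists>U. open U \<and> z \<in> U \<and> eventually (\<lambda>\<rho>. \<forall>w\<in>U. Q \<rho> w) F"
  shows "eventually (\<lambda>\<rho>. \<forall>w\<in>S. Q \<rho> w) F"
proof -
  let ?T = "{U. open U \<and> eventually (\<lambda>\<rho>. \<forall>w\<in>U. Q \<rho> w) F}"
  have "S \<subseteq> \<Union>?T" using assms(2) by blast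
  then obtain T' where T': "T' \<subseteq> ?T" "finite T'" "S \<subseteq> \<Union>T'"
    using compactE[OF assms(1), of ?T] by blast
  have "eventually (\<lambda>\<rho>. \<forall>U\<in>T'. \<forall>w\<in>U. Q \<rho> w) F"
    using T' by (intro eventually_ball_finite) auto
  then show ?thesis by (rule eventually_mono) (use T' in blast)
qed



lemma sub_core:
  fixes \<Omega> :: "'n::finite pt set" and X :: "('n pt \<Rightarrow> real) set" and g :: "'n pt \<Rightarrow> real"
    and A :: "real \<Rightarrow> 'n pt \<Rightarrow> ('n pt \<Rightarrow> real) \<Rightarrow> real \<Rightarrow> real"
    and F :: "'n pt \<Rightarrow> real \<Rightarrow> 'n pt \<Rightarrow> 'n mat \<Rightarrow> real"
    and u :: "real \<Rightarrow> 'n pt \<Rightarrow> real" and \<phi> :: "'n pt \<Rightarrow> real"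
  assumes Cb_sub: "Cb_inf \<subseteq> X"
    and A_b: "\<And>\<rho> x \<phi> s1 s2. 0 < \<rho> \<Longrightarrow> x \<in> \<Omega> \<Longrightarrow> \<phi> \<in> X \<Longrightarrow> s1 \<le> s2 \<Longrightarrow> A \<rho> x \<phi> s1 \<le> A \<rho> x \<phi> s2"
    and cons: "consistent \<Omega> g A F"
    and u_sol: "\<And>\<rho>. 0 < \<rho> \<Longrightarrow> dpp_sol \<Omega> X g A \<rho> (u \<rho>)"
    and C: "\<forall>\<rho>>0. \<forall>x. \<bar>u \<rho> x\<bar> \<le> C"
    and phi: "\<phi> \<in> Cb_inf" and x0: "x0 \<in> closure \<Omega>"
    and mx: "\<forall>y\<in>closure \<Omega>. ubar u y - \<phi> y \<le> ubar u x0 - \<phi> x0"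
    and R1: "0 < R1" and H: "\<forall>w\<in>ball x0 R1. w \<notin> \<Omega> \<longrightarrow> g w \<le> \<phi> w + (ubar u x0 - \<phi> x0)"
  shows "(x0 \<in> \<Omega> \<longrightarrow> Flower \<Omega> F x0 (ubar u x0) (grad \<phi> x0) (hess \<phi> x0) \<le> 0) \<and>
         (x0 \<in> frontier \<Omega> \<longrightarrow> min (ereal (ubar u x0 - ustar g x0)) (Flower \<Omega> F x0 (ubar u x0) (grad \<phi> x0) (hess \<phi> x0)) \<le> 0)"
proof -
  define c where "c = ubar u x0 - \<phi> x0"
  have "bounded (range (ipartial [] \<phi>))" using phi unfolding Cb_inf_def by blast
  then have "bounded (range \<phi>)" by simp
  then obtain C\<phi> where Cphi: "\<And>z. \<bar>\<phi> z\<bar> \<le> C\<phi>" unfolding bounded_iff by auto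
  have C0: "0 \<le> C" using C[rule_format, of 1 x0] by linarith
  define M where "M = C + C\<phi> + \<bar>c\<bar> + 1"
  have Mpos: "0 < M" unfolding M_def using C0 Cphi[of x0] by linarith
  define R0 where "R0 = R1 / 2"
  have R0: "0 < R0" "R0 < R1" using R1 by (auto simp: R0_def)
  define N where "N = real CARD('n)"
  have Npos: "0 < N" by (simp add: N_def)
  have tpos: "\<And>s. 0 < s \<Longrightarrow> 0 < tanh (s / N) ^ 4" using Npos by simp
  define K where "K = M / tanh (R0 / N) ^ 4"
  have Kpos: "0 < K" unfolding K_def using Mpos tpos[OF R0(1)] by simp
  have KM: "K * tanh (R0 / N) ^ 4 = M" unfolding K_def using tpos[OF R0(1)] by simp
  define \<psi> where "\<psi> = (\<lambda>z. \<phi> z + (c + bump K x0 z))"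
  have psiCb: "\<psi> \<in> Cb_inf" unfolding \<psi>_def by (rule Cb_plus[OF phi Cls.Cadd[OF Cls.Cconst bump_Cls]])
  have psiX: "(\<lambda>z. \<psi> z + \<xi>) \<in> X" for \<xi>
  proof -
    have "(\<lambda>z. \<psi> z + \<xi>) = (\<lambda>z. \<phi> z + ((c + \<xi>) + bump K x0 z))" by (auto simp: \<psi>_def)
    also have "\<dots> \<in> Cb_inf" by (rule Cb_plus[OF phi Cls.Cadd[OF Cls.Cconst bump_Cls]])
    finally show ?thesis using Cb_sub by blast
  qed
  have psix0: "\<psi> x0 = ubar u x0" by (simp add: \<psi>_def bump_x0 c_def)
  have gh: "grad \<psi> x0 = grad \<phi> x0" "hess \<psi> x0 = hess \<phi> x0"
    unfolding \<psi>_def using grad_hess_pert[OF phi] by auto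
  have bnn: "\<And>z. 0 \<le> bump K x0 z" using Kpos by (intro bump_nonneg) simp
  have bfar: "\<And>z s. 0 < s \<Longrightarrow> s \<le> dist x0 z \<Longrightarrow> K * tanh (s / N) ^ 4 \<le> bump K x0 z"
    unfolding N_def using Kpos by (intro bump_far) auto
  have sub: "\<And>\<rho>. 0 < \<rho> \<Longrightarrow> dpp_subsol \<Omega> X g A \<rho> (u \<rho>)" using u_sol unfolding dpp_sol_def by blast
  have ug: "u \<rho> w = g w" if "0 < \<rho>" "w \<notin> \<Omega>" for \<rho> :: real and w
  proof -
    have "dpp_supersol \<Omega> X g A \<rho> (u \<rho>)" "dpp_subsol \<Omega> X g A \<rho> (u \<rho>)"
      using u_sol[OF that(1)] unfolding dpp_sol_def by auto
    then have "g w \<le> u \<rho> w" "u \<rho> w \<le> g w" using that(2) unfolding dpp_subsol_def dpp_supersol_def by auto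
    then show ?thesis by simp
  qed
  have far0: "\<And>\<rho> z. 0 < \<rho> \<Longrightarrow> z \<notin> cball x0 R0 \<Longrightarrow> u \<rho> z - \<psi> z \<le> -1"
  proof -
    fix \<rho> :: real and z assume "0 < \<rho>" "z \<notin> cball x0 R0"
    then have "R0 \<le> dist x0 z" by simp
    from bfar[OF R0(1) this] KM have "M \<le> bump K x0 z" by simp
    moreover have "u \<rho> z \<le> C" using C \<open>0 < \<rho>\<close> by (meson abs_le_D1)
    moreover have "- C\<phi> \<le> \<phi> z" using Cphi[of z] by linarith
    ultimately show "u \<rho> z - \<psi> z \<le> -1" unfolding \<psi>_def M_def by linarith
  qed
  obtain \<omega> where om: "positive_modulus \<omega>"
    and CC1: "x0 \<in> \<Omega> \<longrightarrow> Flower \<Omega> F x0 (\<psi> x0) (grad \<psi> x0) (hess \<psi> x0) \<le>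
       Liminf (at_right 0 \<times>\<^sub>F nhds x0 \<times>\<^sub>F nhds 0)
             (\<lambda>(\<rho>, y, \<xi>). ereal (Bop \<Omega> g A \<rho> y (\<lambda>z. \<psi> z + \<xi>) (\<psi> y + \<xi> - \<omega> \<rho>)))"
    and CC2: "x0 \<in> frontier \<Omega> \<longrightarrow> min (ereal (\<psi> x0 - ustar g x0)) (Flower \<Omega> F x0 (\<psi> x0) (grad \<psi> x0) (hess \<psi> x0)) \<le>
       Liminf (at_right 0 \<times>\<^sub>F nhds x0 \<times>\<^sub>F nhds 0)
             (\<lambda>(\<rho>, y, \<xi>). ereal (Bop \<Omega> g A \<rho> y (\<lambda>z. \<psi> z + \<xi>) (\<psi> y + \<xi> - \<omega> \<rho>)))"
    using cons x0 psiCb unfolding consistent_def Let_def by blast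
  have key: "Liminf (at_right 0 \<times>\<^sub>F nhds x0 \<times>\<^sub>F nhds 0)
             (\<lambda>(\<rho>, y, \<xi>). ereal (Bop \<Omega> g A \<rho> y (\<lambda>z. \<psi> z + \<xi>) (\<psi> y + \<xi> - \<omega> \<rho>))) \<le> 0"
  proof (rule ccontr)
    assume "\<not> ?thesis"
    then have "0 < Liminf (at_right 0 \<times>\<^sub>F nhds x0 \<times>\<^sub>F nhds 0)
             (\<lambda>(\<rho>, y, \<xi>). ereal (Bop \<Omega> g A \<rho> y (\<lambda>z. \<psi> z + \<xi>) (\<psi> y + \<xi> - \<omega> \<rho>)))" by simp
    from less_LiminfD[OF this] obtain Pr Pyx where
      P1: "eventually Pr (at_right 0)" "eventually Pyx (nhds x0 \<times>\<^sub>F nhds 0)"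
        "\<forall>\<rho> p. Pr \<rho> \<longrightarrow> Pyx p \<longrightarrow> 0 < (case p of (y, \<xi>) \<Rightarrow> ereal (Bop \<Omega> g A \<rho> y (\<lambda>z. \<psi> z + \<xi>) (\<psi> y + \<xi> - \<omega> \<rho>)))"
      unfolding eventually_prod_filter by auto
    from P1(2) obtain Py Pxi where P2: "eventually Py (nhds x0)" "eventually Pxi (nhds 0)"
      "\<forall>y \<xi>. Py y \<longrightarrow> Pxi \<xi> \<longrightarrow> Pyx (y, \<xi>)"
      unfolding eventually_prod_filter by auto
    have P: "\<And>\<rho> y \<xi>. Pr \<rho> \<Longrightarrow> Py y \<Longrightarrow> Pxi \<xi> \<Longrightarrow> 0 < Bop \<Omega> g A \<rho> y (\<lambda>z. \<psi> z + \<xi>) (\<psi> y + \<xi> - \<omega> \<rho>)"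
      using P1(3) P2(3) by fastforce
    obtain r where r: "0 < r" "\<And>y. dist y x0 < r \<Longrightarrow> Py y" using P2(1) unfolding eventually_nhds_metric by blast
    obtain \<eta> where eta: "0 < \<eta>" "\<And>\<xi>. dist \<xi> 0 < \<eta> \<Longrightarrow> Pxi \<xi>" using P2(2) unfolding eventually_nhds_metric by blast
    define m where "m = K * tanh (r / N) ^ 4"
    have mpos: "0 < m" unfolding m_def using Kpos tpos[OF r(1)] by simp
    define \<epsilon> where "\<epsilon> = min (\<eta> / 2) (min (m / 4) (1 / 4))"
    have epos: "0 < \<epsilon>" unfolding \<epsilon>_def using eta mpos by simp
    have e_m: "\<epsilon> \<le> m / 4" and e_1: "\<epsilon> \<le> 1 / 4" and e_eta: "\<epsilon> \<le> \<eta> / 2" unfolding \<epsilon>_def by auto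
    have om0: "\<omega> 0 = 0" and omc: "continuous_on {0..} \<omega>" and oms: "strict_mono_on {0..} \<omega>"
      using om unfolding positive_modulus_def by auto
    have ompos: "0 < \<omega> \<rho>" if "0 < \<rho>" for \<rho> :: real
      using oms[unfolded strict_mono_on_def, rule_format, of 0 \<rho>] that om0 by simp
    have "(\<omega> \<longlongrightarrow> \<omega> 0) (at 0 within {0..})" using omc unfolding continuous_on_def by auto
    then have "(\<omega> \<longlongrightarrow> 0) (at_right 0)" using om0 by (auto elim: tendsto_within_subset)
    then have E3: "eventually (\<lambda>\<rho>. \<omega> \<rho> < min (m / 4) (1 / 4)) (at_right 0)"
      using mpos by (intro order_tendstoD(2)) auto
    have E4: "eventually (\<lambda>\<rho>. \<forall>w\<in>cball x0 R0. u \<rho> w - \<phi> w - c < \<epsilon>) (at_right 0)"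
    proof (rule compact_eventually[OF compact_cball], intro ballI)
      fix z assume zc: "z \<in> cball x0 R0"
      show "\<exists>U. open U \<and> z \<in> U \<and> eventually (\<lambda>\<rho>. \<forall>w\<in>U. u \<rho> w - \<phi> w - c < \<epsilon>) (at_right 0)"
      proof (cases "z \<in> closure \<Omega>")
        case True
        then have zle: "ubar u z - \<phi> z - c \<le> 0" using mx by (simp add: c_def)
        have "Limsup (at_right 0 \<times>\<^sub>F nhds z) (\<lambda>(\<rho>, y). ereal (u \<rho> y)) < ereal (ubar u z + \<epsilon> / 2)"
          unfolding ubar_eq[OF C, symmetric] using epos by simp
        from Limsup_lessD[OF this] obtain Pf Pg where
          Q: "eventually Pf (at_right 0)" "eventually Pg (nhds z)" "\<forall>\<rho> y. Pf \<rho> \<longrightarrow> Pg y \<longrightarrow> u \<rho> y < ubar u z + \<epsilon> / 2"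
          unfolding eventually_prod_filter by auto
        have "eventually (\<lambda>w. Pg w \<and> \<bar>\<phi> w - \<phi> z\<bar> < \<epsilon> / 2) (nhds z)"
          using Q(2) diff_cont_ev[of \<phi> z "\<epsilon>/2"] phi epos unfolding Cb_inf_def
          by (intro eventually_conj) (auto dest: spec[of _ "[]"])
        then obtain U where U: "open U" "z \<in> U" "\<forall>w\<in>U. Pg w \<and> \<bar>\<phi> w - \<phi> z\<bar> < \<epsilon> / 2"
          unfolding eventually_nhds by blast
        show ?thesis
        proof (intro exI conjI)
          show "eventually (\<lambda>\<rho>. \<forall>w\<in>U. u \<rho> w - \<phi> w - c < \<epsilon>) (at_right 0)"
            using Q(1)
          proof (rule eventually_mono)
            fix \<rho> assume "Pf \<rho>"
            show "\<forall>w\<in>U. u \<rho> w - \<phi> w - c < \<epsilon>"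
            proof
              fix w assume "w \<in> U"
              then have "u \<rho> w < ubar u z + \<epsilon> / 2" "\<bar>\<phi> w - \<phi> z\<bar> < \<epsilon> / 2" using Q(3) U(3) \<open>Pf \<rho>\<close> by auto
              then show "u \<rho> w - \<phi> w - c < \<epsilon>" using zle by linarith
            qed
          qed
        qed (use U in auto)
      next
        case False
        show ?thesis
        proof (intro exI conjI)
          show "open (ball x0 R1 - closure \<Omega>)" by (auto intro: open_Diff)
          show "z \<in> ball x0 R1 - closure \<Omega>" using zc False R0 by auto
          show "eventually (\<lambda>\<rho>. \<forall>w\<in>ball x0 R1 - closure \<Omega>. u \<rho> w - \<phi> w - c < \<epsilon>) (at_right 0)"
            using eventually_at_right_less[of 0]
          proof (rule eventually_mono)
            fix \<rho> :: real assume "0 < \<rho>"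
            show "\<forall>w\<in>ball x0 R1 - closure \<Omega>. u \<rho> w - \<phi> w - c < \<epsilon>"
            proof
              fix w assume w: "w \<in> ball x0 R1 - closure \<Omega>"
              then have "w \<notin> \<Omega>" using closure_subset by blast
              then show "u \<rho> w - \<phi> w - c < \<epsilon>"
                using ug[OF \<open>0 < \<rho>\<close>] H w epos by (auto simp: c_def)
            qed
          qed
        qed
      qed
    qed
    define E where "E = (\<lambda>\<rho>. Pr \<rho> \<and> 0 < \<rho> \<and> \<omega> \<rho> < min (m / 4) (1 / 4) \<and> (\<forall>w\<in>cball x0 R0. u \<rho> w - \<phi> w - c < \<epsilon>))"
    have EE: "eventually E (at_right 0)"
      unfolding E_def using P1(1) eventually_at_right_less[of 0] E3 E4 by (intro eventually_conj) auto
    have "ereal (ubar u x0 - \<epsilon> / 2) < Limsup (at_right 0 \<times>\<^sub>F nhds x0) (\<lambda>(\<rho>, y). ereal (u \<rho> y))"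
      unfolding ubar_eq[OF C, symmetric] using epos by simp
    from less_Limsup_frequently[OF this]
    have FR: "frequently (\<lambda>(\<rho>, y). ubar u x0 - \<epsilon> / 2 < u \<rho> y) (at_right 0 \<times>\<^sub>F nhds x0)"
      by (simp add: case_prod_unfold)
    have "eventually (\<lambda>w. \<bar>\<psi> w - \<psi> x0\<bar> < \<epsilon> / 2) (nhds x0)"
      using psiCb epos unfolding Cb_inf_def by (intro diff_cont_ev) (auto dest: spec[of _ "[]"])
    from ev_snd[OF this] ev_fst[OF EE]
    have "eventually (\<lambda>(\<rho>, y). \<bar>\<psi> y - \<psi> x0\<bar> < \<epsilon> / 2 \<and> E \<rho>) (at_right 0 \<times>\<^sub>F nhds x0)"
      by eventually_elim auto
    from frequently_eventually_frequently[OF FR this]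
    obtain \<rho> z where rz: "ubar u x0 - \<epsilon> / 2 < u \<rho> z" "\<bar>\<psi> z - \<psi> x0\<bar> < \<epsilon> / 2" "E \<rho>"
      by (auto dest!: frequently_ex)
    have Pr: "Pr \<rho>" and rpos: "0 < \<rho>" and omr: "\<omega> \<rho> < min (m / 4) (1 / 4)"
      and unif: "\<forall>w\<in>cball x0 R0. u \<rho> w - \<phi> w - c < \<epsilon>" using rz(3) unfolding E_def by auto
    have om_m: "\<omega> \<rho> < m / 4" and om_1: "\<omega> \<rho> < 1 / 4" using omr by auto
    have zlow: "- \<epsilon> < u \<rho> z - \<psi> z" using rz psix0 by linarith
    have upb: "u \<rho> w - \<psi> w \<le> \<epsilon>" for w
    proof (cases "w \<in> cball x0 R0")
      case True
      then show ?thesis using unif bnn[of w] unfolding \<psi>_def by fastforce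
    next
      case False
      then show ?thesis using far0[OF rpos False] epos by linarith
    qed
    define \<xi> where "\<xi> = (SUP w. u \<rho> w - \<psi> w)"
    have bdd: "bdd_above (range (\<lambda>w. u \<rho> w - \<psi> w))" using upb by (intro bdd_aboveI2) auto
    have xi_le: "\<xi> \<le> \<epsilon>" unfolding \<xi>_def using upb by (intro cSUP_least) auto
    have xi_ge: "\<And>w. u \<rho> w - \<psi> w \<le> \<xi>" unfolding \<xi>_def using bdd by (intro cSUP_upper) auto
    have ompos': "0 < \<omega> \<rho>" using ompos rpos by blast
    have "\<xi> - \<omega> \<rho> < \<xi>" using ompos' by simp
    then obtain y where y: "\<xi> - \<omega> \<rho> < u \<rho> y - \<psi> y"
      unfolding \<xi>_def[of] using less_cSUP_iff[OF _ bdd] by (metis UNIV_not_empty \<xi>_def)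
    have xi_abs: "dist \<xi> 0 < \<eta>"
      using xi_le zlow xi_ge[of z] eta(1) e_eta by (auto simp: dist_real_def)
    have ybal: "dist y x0 < r"
    proof (rule ccontr)
      assume "\<not> ?thesis"
      then have "r \<le> dist x0 y" by (simp add: dist_commute)
      then have bm: "m \<le> bump K x0 y" unfolding m_def using bfar r(1) by blast
      have low: "- \<epsilon> - \<omega> \<rho> < u \<rho> y - \<psi> y" using y xi_ge[of z] zlow by linarith
      show False
      proof (cases "y \<in> cball x0 R0")
        case True
        then have "u \<rho> y - \<psi> y < \<epsilon> - m" using unif bm unfolding \<psi>_def by fastforce
        then show False using low om_m e_m mpos by linarith
      next
        case False
        then show False using far0[OF rpos False] low om_1 e_1 by linarith
      qed
    qed
    have pos: "0 < Bop \<Omega> g A \<rho> y (\<lambda>z. \<psi> z + \<xi>) (\<psi> y + \<xi> - \<omega> \<rho>)"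
      using P[OF Pr r(2)[OF ybal] eta(2)[OF xi_abs]] .
    have dom: "\<forall>w. u \<rho> w \<le> \<psi> w + \<xi>" using xi_ge by (smt (verit))
    have sy: "\<psi> y + \<xi> - \<omega> \<rho> \<le> u \<rho> y" using y by linarith
    have "Bop \<Omega> g A \<rho> y (\<lambda>z. \<psi> z + \<xi>) (\<psi> y + \<xi> - \<omega> \<rho>) \<le> 0"
    proof (cases "y \<in> \<Omega>")
      case True
      have "A \<rho> y (\<lambda>z. \<psi> z + \<xi>) (\<psi> y + \<xi> - \<omega> \<rho>) \<le> A \<rho> y (\<lambda>z. \<psi> z + \<xi>) (u \<rho> y)"
        by (rule A_b[OF rpos True psiX sy])
      also have "\<dots> \<le> 0"
      proof -
        have h: "\<forall>x\<in>\<Omega>. \<forall>\<phi>\<in>X. (\<forall>y. u \<rho> y \<le> \<phi> y) \<longrightarrow> A \<rho> x \<phi> (u \<rho> x) \<le> 0"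
          using sub[OF rpos] unfolding dpp_subsol_def by blast
        show ?thesis using h[rule_format, OF True psiX[of \<xi>]] dom by simp
      qed
      finally show ?thesis using True by (simp add: Bop_def)
    next
      case False
      then show ?thesis using sy ug[OF rpos False] by (simp add: Bop_def)
    qed
    then show False using pos by simp
  qed
  show ?thesis
  proof (intro conjI impI)
    assume "x0 \<in> \<Omega>"
    with CC1 have "Flower \<Omega> F x0 (\<psi> x0) (grad \<psi> x0) (hess \<psi> x0) \<le>
       Liminf (at_right 0 \<times>\<^sub>F nhds x0 \<times>\<^sub>F nhds 0)
             (\<lambda>(\<rho>, y, \<xi>). ereal (Bop \<Omega> g A \<rho> y (\<lambda>z. \<psi> z + \<xi>) (\<psi> y + \<xi> - \<omega> \<rho>)))" by blast
    from order_trans[OF this key]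
    show "Flower \<Omega> F x0 (ubar u x0) (grad \<phi> x0) (hess \<phi> x0) \<le> 0"
      by (simp only: psix0 gh)
  next
    assume "x0 \<in> frontier \<Omega>"
    with CC2 have "min (ereal (\<psi> x0 - ustar g x0)) (Flower \<Omega> F x0 (\<psi> x0) (grad \<psi> x0) (hess \<psi> x0)) \<le>
       Liminf (at_right 0 \<times>\<^sub>F nhds x0 \<times>\<^sub>F nhds 0)
             (\<lambda>(\<rho>, y, \<xi>). ereal (Bop \<Omega> g A \<rho> y (\<lambda>z. \<psi> z + \<xi>) (\<psi> y + \<xi> - \<omega> \<rho>)))" by blast
    from order_trans[OF this key]
    show "min (ereal (ubar u x0 - ustar g x0)) (Flower \<Omega> F x0 (ubar u x0) (grad \<phi> x0) (hess \<phi> x0)) \<le> 0"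
      by (simp only: psix0 gh)
  qed
qed

lemma super_core:
  fixes \<Omega> :: "'n::finite pt set" and X :: "('n pt \<Rightarrow> real) set" and g :: "'n pt \<Rightarrow> real"
    and A :: "real \<Rightarrow> 'n pt \<Rightarrow> ('n pt \<Rightarrow> real) \<Rightarrow> real \<Rightarrow> real"
    and F :: "'n pt \<Rightarrow> real \<Rightarrow> 'n pt \<Rightarrow> 'n mat \<Rightarrow> real"
    and u :: "real \<Rightarrow> 'n pt \<Rightarrow> real" and \<phi> :: "'n pt \<Rightarrow> real"
  assumes Cb_sub: "Cb_inf \<subseteq> X"
    and A_b: "\<And>\<rho> x \<phi> s1 s2. 0 < \<rho> \<Longrightarrow> x \<in> \<Omega> \<Longrightarrow> \<phi> \<in> X \<Longrightarrow> s1 \<le> s2 \<Longrightarrow> A \<rho> x \<phi> s1 \<le> A \<rho> x \<phi> s2"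
    and cons: "consistent \<Omega> g A F"
    and u_sol: "\<And>\<rho>. 0 < \<rho> \<Longrightarrow> dpp_sol \<Omega> X g A \<rho> (u \<rho>)"
    and C: "\<forall>\<rho>>0. \<forall>x. \<bar>u \<rho> x\<bar> \<le> C"
    and phi: "\<phi> \<in> Cb_inf" and x0: "x0 \<in> closure \<Omega>"
    and mx: "\<forall>y\<in>closure \<Omega>. ulow u x0 - \<phi> x0 \<le> ulow u y - \<phi> y"
    and R1: "0 < R1" and H: "\<forall>w\<in>ball x0 R1. w \<notin> \<Omega> \<longrightarrow> \<phi> w + (ulow u x0 - \<phi> x0) \<le> g w"
  shows "(x0 \<in> \<Omega> \<longrightarrow> 0 \<le> Fupper \<Omega> F x0 (ulow u x0) (grad \<phi> x0) (hess \<phi> x0)) \<and>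
         (x0 \<in> frontier \<Omega> \<longrightarrow> 0 \<le> max (ereal (ulow u x0 - lstar g x0)) (Fupper \<Omega> F x0 (ulow u x0) (grad \<phi> x0) (hess \<phi> x0)))"
proof -
  define c where "c = ulow u x0 - \<phi> x0"
  have "bounded (range (ipartial [] \<phi>))" using phi unfolding Cb_inf_def by blast
  then have "bounded (range \<phi>)" by simp
  then obtain C\<phi> where Cphi: "\<And>z. \<bar>\<phi> z\<bar> \<le> C\<phi>" unfolding bounded_iff by auto
  have C0: "0 \<le> C" using C[rule_format, of 1 x0] by linarith
  define M where "M = C + C\<phi> + \<bar>c\<bar> + 1"
  have Mpos: "0 < M" unfolding M_def using C0 Cphi[of x0] by linarith
  define R0 where "R0 = R1 / 2"
  have R0: "0 < R0" "R0 < R1" using R1 by (auto simp: R0_def)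
  define N where "N = real CARD('n)"
  have Npos: "0 < N" by (simp add: N_def)
  have tpos: "\<And>s. 0 < s \<Longrightarrow> 0 < tanh (s / N) ^ 4" using Npos by simp
  define K where "K = M / tanh (R0 / N) ^ 4"
  have Kpos: "0 < K" unfolding K_def using Mpos tpos[OF R0(1)] by simp
  have KM: "K * tanh (R0 / N) ^ 4 = M" unfolding K_def using tpos[OF R0(1)] by simp
  have bneg: "\<And>z. bump (-K) x0 z = - bump K x0 z" by (simp add: bump_def)
  define \<psi> where "\<psi> = (\<lambda>z. \<phi> z + (c + bump (-K) x0 z))"
  have psiCb: "\<psi> \<in> Cb_inf" unfolding \<psi>_def by (rule Cb_plus[OF phi Cls.Cadd[OF Cls.Cconst bump_Cls]])
  have psiX: "(\<lambda>z. \<psi> z + \<xi>) \<in> X" for \<xi>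
  proof -
    have "(\<lambda>z. \<psi> z + \<xi>) = (\<lambda>z. \<phi> z + ((c + \<xi>) + bump (-K) x0 z))" by (auto simp: \<psi>_def)
    also have "\<dots> \<in> Cb_inf" by (rule Cb_plus[OF phi Cls.Cadd[OF Cls.Cconst bump_Cls]])
    finally show ?thesis using Cb_sub by blast
  qed
  have psix0: "\<psi> x0 = ulow u x0" by (simp add: \<psi>_def bump_x0 c_def)
  have gh: "grad \<psi> x0 = grad \<phi> x0" "hess \<psi> x0 = hess \<phi> x0"
    unfolding \<psi>_def using grad_hess_pert[OF phi] by auto
  have psi_eq: "\<And>z. \<psi> z = \<phi> z + c - bump K x0 z" by (simp add: \<psi>_def bneg)
  have bnn: "\<And>z. 0 \<le> bump K x0 z" using Kpos by (intro bump_nonneg) simp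
  have bfar: "\<And>z s. 0 < s \<Longrightarrow> s \<le> dist x0 z \<Longrightarrow> K * tanh (s / N) ^ 4 \<le> bump K x0 z"
    unfolding N_def using Kpos by (intro bump_far) auto
  have sup: "\<And>\<rho>. 0 < \<rho> \<Longrightarrow> dpp_supersol \<Omega> X g A \<rho> (u \<rho>)" using u_sol unfolding dpp_sol_def by blast
  have ug: "u \<rho> w = g w" if "0 < \<rho>" "w \<notin> \<Omega>" for \<rho> :: real and w
  proof -
    have "dpp_supersol \<Omega> X g A \<rho> (u \<rho>)" "dpp_subsol \<Omega> X g A \<rho> (u \<rho>)"
      using u_sol[OF that(1)] unfolding dpp_sol_def by auto
    then have "g w \<le> u \<rho> w" "u \<rho> w \<le> g w" using that(2) unfolding dpp_subsol_def dpp_supersol_def by auto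
    then show ?thesis by simp
  qed
  have far0: "\<And>\<rho> z. 0 < \<rho> \<Longrightarrow> z \<notin> cball x0 R0 \<Longrightarrow> 1 \<le> u \<rho> z - \<psi> z"
  proof -
    fix \<rho> :: real and z assume "0 < \<rho>" "z \<notin> cball x0 R0"
    then have "R0 \<le> dist x0 z" by simp
    from bfar[OF R0(1) this] KM have "M \<le> bump K x0 z" by simp
    moreover have "- C \<le> u \<rho> z" using C \<open>0 < \<rho>\<close> by (meson abs_le_D2 minus_le_iff)
    moreover have "\<phi> z \<le> C\<phi>" using Cphi[of z] by linarith
    ultimately show "1 \<le> u \<rho> z - \<psi> z" unfolding psi_eq M_def by linarith
  qed
  obtain \<omega> where om: "positive_modulus \<omega>"
    and CC1: "x0 \<in> \<Omega> \<longrightarrow> Limsup (at_right 0 \<times>\<^sub>F nhds x0 \<times>\<^sub>F nhds 0)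
             (\<lambda>(\<rho>, y, \<xi>). ereal (Bop \<Omega> g A \<rho> y (\<lambda>z. \<psi> z + \<xi>) (\<psi> y + \<xi> + \<omega> \<rho>)))
          \<le> Fupper \<Omega> F x0 (\<psi> x0) (grad \<psi> x0) (hess \<psi> x0)"
    and CC2: "x0 \<in> frontier \<Omega> \<longrightarrow> Limsup (at_right 0 \<times>\<^sub>F nhds x0 \<times>\<^sub>F nhds 0)
             (\<lambda>(\<rho>, y, \<xi>). ereal (Bop \<Omega> g A \<rho> y (\<lambda>z. \<psi> z + \<xi>) (\<psi> y + \<xi> + \<omega> \<rho>)))
          \<le> max (ereal (\<psi> x0 - lstar g x0)) (Fupper \<Omega> F x0 (\<psi> x0) (grad \<psi> x0) (hess \<psi> x0))"
    using cons x0 psiCb unfolding consistent_def Let_def by blast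
  have key: "0 \<le> Limsup (at_right 0 \<times>\<^sub>F nhds x0 \<times>\<^sub>F nhds 0)
             (\<lambda>(\<rho>, y, \<xi>). ereal (Bop \<Omega> g A \<rho> y (\<lambda>z. \<psi> z + \<xi>) (\<psi> y + \<xi> + \<omega> \<rho>)))"
  proof (rule ccontr)
    assume "\<not> ?thesis"
    then have "Limsup (at_right 0 \<times>\<^sub>F nhds x0 \<times>\<^sub>F nhds 0)
             (\<lambda>(\<rho>, y, \<xi>). ereal (Bop \<Omega> g A \<rho> y (\<lambda>z. \<psi> z + \<xi>) (\<psi> y + \<xi> + \<omega> \<rho>))) < 0" by simp
    from Limsup_lessD[OF this] obtain Pr Pyx where
      P1: "eventually Pr (at_right 0)" "eventually Pyx (nhds x0 \<times>\<^sub>F nhds 0)"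
        "\<forall>\<rho> p. Pr \<rho> \<longrightarrow> Pyx p \<longrightarrow> (case p of (y, \<xi>) \<Rightarrow> ereal (Bop \<Omega> g A \<rho> y (\<lambda>z. \<psi> z + \<xi>) (\<psi> y + \<xi> + \<omega> \<rho>))) < 0"
      unfolding eventually_prod_filter by auto
    from P1(2) obtain Py Pxi where P2: "eventually Py (nhds x0)" "eventually Pxi (nhds 0)"
      "\<forall>y \<xi>. Py y \<longrightarrow> Pxi \<xi> \<longrightarrow> Pyx (y, \<xi>)"
      unfolding eventually_prod_filter by auto
    have P: "\<And>\<rho> y \<xi>. Pr \<rho> \<Longrightarrow> Py y \<Longrightarrow> Pxi \<xi> \<Longrightarrow> Bop \<Omega> g A \<rho> y (\<lambda>z. \<psi> z + \<xi>) (\<psi> y + \<xi> + \<omega> \<rho>) < 0"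
      using P1(3) P2(3) by fastforce
    obtain r where r: "0 < r" "\<And>y. dist y x0 < r \<Longrightarrow> Py y" using P2(1) unfolding eventually_nhds_metric by blast
    obtain \<eta> where eta: "0 < \<eta>" "\<And>\<xi>. dist \<xi> 0 < \<eta> \<Longrightarrow> Pxi \<xi>" using P2(2) unfolding eventually_nhds_metric by blast
    define m where "m = K * tanh (r / N) ^ 4"
    have mpos: "0 < m" unfolding m_def using Kpos tpos[OF r(1)] by simp
    define \<epsilon> where "\<epsilon> = min (\<eta> / 2) (min (m / 4) (1 / 4))"
    have epos: "0 < \<epsilon>" unfolding \<epsilon>_def using eta mpos by simp
    have e_m: "\<epsilon> \<le> m / 4" and e_1: "\<epsilon> \<le> 1 / 4" and e_eta: "\<epsilon> \<le> \<eta> / 2" unfolding \<epsilon>_def by auto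
    have om0: "\<omega> 0 = 0" and omc: "continuous_on {0..} \<omega>" and oms: "strict_mono_on {0..} \<omega>"
      using om unfolding positive_modulus_def by auto
    have ompos: "0 < \<omega> \<rho>" if "0 < \<rho>" for \<rho> :: real
      using oms[unfolded strict_mono_on_def, rule_format, of 0 \<rho>] that om0 by simp
    have "(\<omega> \<longlongrightarrow> \<omega> 0) (at 0 within {0..})" using omc unfolding continuous_on_def by auto
    then have "(\<omega> \<longlongrightarrow> 0) (at_right 0)" using om0 by (auto elim: tendsto_within_subset)
    then have E3: "eventually (\<lambda>\<rho>. \<omega> \<rho> < min (m / 4) (1 / 4)) (at_right 0)"
      using mpos by (intro order_tendstoD(2)) auto
    have E4: "eventually (\<lambda>\<rho>. \<forall>w\<in>cball x0 R0. - \<epsilon> < u \<rho> w - \<phi> w - c) (at_right 0)"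
    proof (rule compact_eventually[OF compact_cball], intro ballI)
      fix z assume zc: "z \<in> cball x0 R0"
      show "\<exists>U. open U \<and> z \<in> U \<and> eventually (\<lambda>\<rho>. \<forall>w\<in>U. - \<epsilon> < u \<rho> w - \<phi> w - c) (at_right 0)"
      proof (cases "z \<in> closure \<Omega>")
        case True
        then have zle: "0 \<le> ulow u z - \<phi> z - c" using mx by (simp add: c_def)
        have "ereal (ulow u z - \<epsilon> / 2) < Liminf (at_right 0 \<times>\<^sub>F nhds z) (\<lambda>(\<rho>, y). ereal (u \<rho> y))"
          unfolding ulow_eq[OF C, symmetric] using epos by simp
        from less_LiminfD[OF this] obtain Pf Pg where
          Q: "eventually Pf (at_right 0)" "eventually Pg (nhds z)" "\<forall>\<rho> y. Pf \<rho> \<longrightarrow> Pg y \<longrightarrow> ulow u z - \<epsilon> / 2 < u \<rho> y"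
          unfolding eventually_prod_filter by auto
        have "eventually (\<lambda>w. Pg w \<and> \<bar>\<phi> w - \<phi> z\<bar> < \<epsilon> / 2) (nhds z)"
          using Q(2) diff_cont_ev[of \<phi> z "\<epsilon>/2"] phi epos unfolding Cb_inf_def
          by (intro eventually_conj) (auto dest: spec[of _ "[]"])
        then obtain U where U: "open U" "z \<in> U" "\<forall>w\<in>U. Pg w \<and> \<bar>\<phi> w - \<phi> z\<bar> < \<epsilon> / 2"
          unfolding eventually_nhds by blast
        show ?thesis
        proof (intro exI conjI)
          show "eventually (\<lambda>\<rho>. \<forall>w\<in>U. - \<epsilon> < u \<rho> w - \<phi> w - c) (at_right 0)"
            using Q(1)
          proof (rule eventually_mono)
            fix \<rho> assume "Pf \<rho>"
            show "\<forall>w\<in>U. - \<epsilon> < u \<rho> w - \<phi> w - c"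
            proof
              fix w assume "w \<in> U"
              then have "ulow u z - \<epsilon> / 2 < u \<rho> w" "\<bar>\<phi> w - \<phi> z\<bar> < \<epsilon> / 2" using Q(3) U(3) \<open>Pf \<rho>\<close> by auto
              then show "- \<epsilon> < u \<rho> w - \<phi> w - c" using zle by linarith
            qed
          qed
        qed (use U in auto)
      next
        case False
        show ?thesis
        proof (intro exI conjI)
          show "open (ball x0 R1 - closure \<Omega>)" by (auto intro: open_Diff)
          show "z \<in> ball x0 R1 - closure \<Omega>" using zc False R0 by auto
          show "eventually (\<lambda>\<rho>. \<forall>w\<in>ball x0 R1 - closure \<Omega>. - \<epsilon> < u \<rho> w - \<phi> w - c) (at_right 0)"
            using eventually_at_right_less[of 0]
          proof (rule eventually_mono)
            fix \<rho> :: real assume "0 < \<rho>"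
            show "\<forall>w\<in>ball x0 R1 - closure \<Omega>. - \<epsilon> < u \<rho> w - \<phi> w - c"
            proof
              fix w assume w: "w \<in> ball x0 R1 - closure \<Omega>"
              then have "w \<notin> \<Omega>" using closure_subset by blast
              then show "- \<epsilon> < u \<rho> w - \<phi> w - c"
                using ug[OF \<open>0 < \<rho>\<close>] H w epos by (auto simp: c_def)
            qed
          qed
        qed
      qed
    qed
    define E where "E = (\<lambda>\<rho>. Pr \<rho> \<and> 0 < \<rho> \<and> \<omega> \<rho> < min (m / 4) (1 / 4) \<and> (\<forall>w\<in>cball x0 R0. - \<epsilon> < u \<rho> w - \<phi> w - c))"
    have EE: "eventually E (at_right 0)"
      unfolding E_def using P1(1) eventually_at_right_less[of 0] E3 E4 by (intro eventually_conj) auto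
    have "Liminf (at_right 0 \<times>\<^sub>F nhds x0) (\<lambda>(\<rho>, y). ereal (u \<rho> y)) < ereal (ulow u x0 + \<epsilon> / 2)"
      unfolding ulow_eq[OF C, symmetric] using epos by simp
    from Liminf_less_frequently[OF this]
    have FR: "frequently (\<lambda>(\<rho>, y). u \<rho> y < ulow u x0 + \<epsilon> / 2) (at_right 0 \<times>\<^sub>F nhds x0)"
      by (simp add: case_prod_unfold)
    have "eventually (\<lambda>w. \<bar>\<psi> w - \<psi> x0\<bar> < \<epsilon> / 2) (nhds x0)"
      using psiCb epos unfolding Cb_inf_def by (intro diff_cont_ev) (auto dest: spec[of _ "[]"])
    from ev_snd[OF this] ev_fst[OF EE]
    have "eventually (\<lambda>(\<rho>, y). \<bar>\<psi> y - \<psi> x0\<bar> < \<epsilon> / 2 \<and> E \<rho>) (at_right 0 \<times>\<^sub>F nhds x0)"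
      by eventually_elim auto
    from frequently_eventually_frequently[OF FR this]
    obtain \<rho> z where rz: "u \<rho> z < ulow u x0 + \<epsilon> / 2" "\<bar>\<psi> z - \<psi> x0\<bar> < \<epsilon> / 2" "E \<rho>"
      by (auto dest!: frequently_ex)
    have Pr: "Pr \<rho>" and rpos: "0 < \<rho>" and omr: "\<omega> \<rho> < min (m / 4) (1 / 4)"
      and unif: "\<forall>w\<in>cball x0 R0. - \<epsilon> < u \<rho> w - \<phi> w - c" using rz(3) unfolding E_def by auto
    have om_m: "\<omega> \<rho> < m / 4" and om_1: "\<omega> \<rho> < 1 / 4" using omr by auto
    have zup: "u \<rho> z - \<psi> z < \<epsilon>" using rz psix0 by linarith
    have lowb: "- \<epsilon> \<le> u \<rho> w - \<psi> w" for w
    proof (cases "w \<in> cball x0 R0")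
      case True
      then show ?thesis using unif bnn[of w] unfolding psi_eq by fastforce
    next
      case False
      then show ?thesis using far0[OF rpos False] epos by linarith
    qed
    define \<xi> where "\<xi> = (INF w. u \<rho> w - \<psi> w)"
    have bdd: "bdd_below (range (\<lambda>w. u \<rho> w - \<psi> w))" using lowb by (intro bdd_belowI2) auto
    have xi_ge: "- \<epsilon> \<le> \<xi>" unfolding \<xi>_def using lowb by (intro cINF_greatest) auto
    have xi_le: "\<And>w. \<xi> \<le> u \<rho> w - \<psi> w" unfolding \<xi>_def using bdd by (intro cINF_lower) auto
    have ompos': "0 < \<omega> \<rho>" using ompos rpos by blast
    have "\<xi> < \<xi> + \<omega> \<rho>" using ompos' by simp
    then obtain y where y: "u \<rho> y - \<psi> y < \<xi> + \<omega> \<rho>"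
      using cINF_less_iff[OF _ bdd] by (metis UNIV_not_empty \<xi>_def)
    have xi_abs: "dist \<xi> 0 < \<eta>"
      using xi_ge zup xi_le[of z] eta(1) e_eta by (auto simp: dist_real_def)
    have ybal: "dist y x0 < r"
    proof (rule ccontr)
      assume "\<not> ?thesis"
      then have "r \<le> dist x0 y" by (simp add: dist_commute)
      then have bm: "m \<le> bump K x0 y" unfolding m_def using bfar r(1) by blast
      have upp: "u \<rho> y - \<psi> y < \<epsilon> + \<omega> \<rho>" using y xi_le[of z] zup by linarith
      show False
      proof (cases "y \<in> cball x0 R0")
        case True
        then have "m - \<epsilon> < u \<rho> y - \<psi> y" using unif bm unfolding psi_eq by fastforce
        then show False using upp om_m e_m mpos by linarith
      next
        case False
        then show False using far0[OF rpos False] upp om_1 e_1 by linarith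
      qed
    qed
    have neg: "Bop \<Omega> g A \<rho> y (\<lambda>z. \<psi> z + \<xi>) (\<psi> y + \<xi> + \<omega> \<rho>) < 0"
      using P[OF Pr r(2)[OF ybal] eta(2)[OF xi_abs]] .
    have dom: "\<forall>w. \<psi> w + \<xi> \<le> u \<rho> w" using xi_le by (smt (verit))
    have sy: "u \<rho> y \<le> \<psi> y + \<xi> + \<omega> \<rho>" using y by linarith
    have "0 \<le> Bop \<Omega> g A \<rho> y (\<lambda>z. \<psi> z + \<xi>) (\<psi> y + \<xi> + \<omega> \<rho>)"
    proof (cases "y \<in> \<Omega>")
      case True
      have "0 \<le> A \<rho> y (\<lambda>z. \<psi> z + \<xi>) (u \<rho> y)"
      proof -
        have h: "\<forall>x\<in>\<Omega>. \<forall>\<phi>\<in>X. (\<forall>y. \<phi> y \<le> u \<rho> y) \<longrightarrow> 0 \<le> A \<rho> x \<phi> (u \<rho> x)"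
          using sup[OF rpos] unfolding dpp_supersol_def by blast
        show ?thesis using h[rule_format, OF True psiX[of \<xi>]] dom by simp
      qed
      also have "\<dots> \<le> A \<rho> y (\<lambda>z. \<psi> z + \<xi>) (\<psi> y + \<xi> + \<omega> \<rho>)"
        by (rule A_b[OF rpos True psiX sy])
      finally show ?thesis using True by (simp add: Bop_def)
    next
      case False
      then show ?thesis using sy ug[OF rpos False] by (simp add: Bop_def)
    qed
    then show False using neg by simp
  qed
  show ?thesis
  proof (intro conjI impI)
    assume "x0 \<in> \<Omega>"
    with CC1 have "Limsup (at_right 0 \<times>\<^sub>F nhds x0 \<times>\<^sub>F nhds 0)
             (\<lambda>(\<rho>, y, \<xi>). ereal (Bop \<Omega> g A \<rho> y (\<lambda>z. \<psi> z + \<xi>) (\<psi> y + \<xi> + \<omega> \<rho>)))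
          \<le> Fupper \<Omega> F x0 (\<psi> x0) (grad \<psi> x0) (hess \<psi> x0)" by blast
    from order_trans[OF key this]
    show "0 \<le> Fupper \<Omega> F x0 (ulow u x0) (grad \<phi> x0) (hess \<phi> x0)"
      by (simp only: psix0 gh)
  next
    assume "x0 \<in> frontier \<Omega>"
    with CC2 have "Limsup (at_right 0 \<times>\<^sub>F nhds x0 \<times>\<^sub>F nhds 0)
             (\<lambda>(\<rho>, y, \<xi>). ereal (Bop \<Omega> g A \<rho> y (\<lambda>z. \<psi> z + \<xi>) (\<psi> y + \<xi> + \<omega> \<rho>)))
          \<le> max (ereal (\<psi> x0 - lstar g x0)) (Fupper \<Omega> F x0 (\<psi> x0) (grad \<psi> x0) (hess \<psi> x0))" by blast
    from order_trans[OF key this]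
    show "0 \<le> max (ereal (ulow u x0 - lstar g x0)) (Fupper \<Omega> F x0 (ulow u x0) (grad \<phi> x0) (hess \<phi> x0))"
      by (simp only: psix0 gh)
  qed
qed


lemma gstar_eq:
  fixes g :: "'n::finite pt \<Rightarrow> real"
  assumes "g \<in> Xbar"
  shows "ereal (ustar g x) = Limsup (nhds x) (\<lambda>y. ereal (g y))"
    and "ereal (lstar g x) = Liminf (nhds x) (\<lambda>y. ereal (g y))"
proof -
  obtain B where B: "\<And>y. \<bar>g y\<bar> \<le> B" using assms unfolding Xbar_def bounded_iff by auto
  have ev1: "eventually (\<lambda>y. ereal (g y) \<le> ereal B) (nhds x)"
  proof (intro always_eventually allI)
    fix y show "ereal (g y) \<le> ereal B" using B[of y] by (simp add: abs_le_iff)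
  qed
  have ev2: "eventually (\<lambda>y. ereal (- B) \<le> ereal (g y)) (nhds x)"
  proof (intro always_eventually allI)
    fix y show "ereal (- B) \<le> ereal (g y)" using B[of y] by (simp add: abs_le_iff)
  qed
  have a: "Limsup (nhds x) (\<lambda>y. ereal (g y)) \<le> ereal B" by (rule Limsup_bounded[OF ev1])
  have b: "ereal (- B) \<le> Liminf (nhds x) (\<lambda>y. ereal (g y))" by (rule Liminf_bounded[OF ev2])
  have c: "Liminf (nhds x) (\<lambda>y. ereal (g y)) \<le> Limsup (nhds x) (\<lambda>y. ereal (g y))"
    by (rule Liminf_le_Limsup[OF nhds_neq_bot])
  have "\<bar>Limsup (nhds x) (\<lambda>y. ereal (g y))\<bar> \<noteq> \<infinity>"
    using a b c by (cases "Limsup (nhds x) (\<lambda>y. ereal (g y))") auto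
  then show "ereal (ustar g x) = Limsup (nhds x) (\<lambda>y. ereal (g y))"
    unfolding ustar_def usc_env_def by (simp add: ereal_real')
  have "\<bar>Liminf (nhds x) (\<lambda>y. ereal (g y))\<bar> \<noteq> \<infinity>"
    using a b c by (cases "Liminf (nhds x) (\<lambda>y. ereal (g y))") auto
  then show "ereal (lstar g x) = Liminf (nhds x) (\<lambda>y. ereal (g y))"
    unfolding lstar_def lsc_env_def by (simp add: ereal_real')
qed

lemma open_frontier_iff: "open \<Omega> \<Longrightarrow> x \<in> closure \<Omega> \<Longrightarrow> (x \<in> frontier \<Omega> \<longleftrightarrow> x \<notin> \<Omega>)"
  by (simp add: frontier_def interior_open)

theorem mainTheorem3:
  fixes \<Omega> :: "(real ^ 'n::finite) set"
    and X :: "(real ^ 'n \<Rightarrow> real) set"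
    and g :: "real ^ 'n \<Rightarrow> real"
    and A :: "real \<Rightarrow> real ^ 'n \<Rightarrow> (real ^ 'n \<Rightarrow> real) \<Rightarrow> real \<Rightarrow> real"
    and F :: "real ^ 'n \<Rightarrow> real \<Rightarrow> real ^ 'n \<Rightarrow> real ^ 'n ^ 'n \<Rightarrow> real"
    and u :: "real \<Rightarrow> real ^ 'n \<Rightarrow> real"
  assumes \<Omega>_open: "open \<Omega>" and \<Omega>_conn: "connected \<Omega>"
    and X_sub: "X \<subseteq> Xbar" and Cb_sub: "Cb_inf \<subseteq> X"
    and g_bdd: "g \<in> Xbar"
    and F_proper: "\<And>x s1 s2 p M. x \<in> \<Omega> \<Longrightarrow> M \<in> sym_mats \<Longrightarrow> s1 \<le> s2 \<Longrightarrow> F x s1 p M \<le> F x s2 p M"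
    and F_elliptic: "\<And>x s p M1 M2. x \<in> \<Omega> \<Longrightarrow> M1 \<in> sym_mats \<Longrightarrow> M2 \<in> sym_mats \<Longrightarrow>
                       mat_le M1 M2 \<Longrightarrow> F x s p M2 \<le> F x s p M1"
    and A_a: "\<And>\<rho> x \<phi>1 \<phi>2 s. 0 < \<rho> \<Longrightarrow> x \<in> \<Omega> \<Longrightarrow> \<phi>1 \<in> X \<Longrightarrow> \<phi>2 \<in> X \<Longrightarrow>
                 (\<forall>y. \<phi>1 y \<le> \<phi>2 y) \<Longrightarrow> A \<rho> x \<phi>2 s \<le> A \<rho> x \<phi>1 s"
    and A_b: "\<And>\<rho> x \<phi> s1 s2. 0 < \<rho> \<Longrightarrow> x \<in> \<Omega> \<Longrightarrow> \<phi> \<in> X \<Longrightarrow>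
                 s1 \<le> s2 \<Longrightarrow> A \<rho> x \<phi> s1 \<le> A \<rho> x \<phi> s2"
    and A_c: "\<And>\<rho> x \<phi>. 0 < \<rho> \<Longrightarrow> x \<in> \<Omega> \<Longrightarrow> \<phi> \<in> X \<Longrightarrow> \<exists>!s. A \<rho> x \<phi> s = 0"
    and cons: "consistent \<Omega> g A F"
    and u_sol: "\<And>\<rho>. 0 < \<rho> \<Longrightarrow> dpp_sol \<Omega> X g A \<rho> (u \<rho>)"
    and u_bdd: "\<exists>C. \<forall>\<rho>>0. \<forall>x. \<bar>u \<rho> x\<bar> \<le> C"
  shows "upper_semicont (ubar u) \<and> visc_subsol \<Omega> g F (ubar u)
       \<and> lower_semicont (ulow u) \<and> visc_supersol \<Omega> g F (ulow u)"
proof -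
  obtain C where C: "\<forall>\<rho>>0. \<forall>x. \<bar>u \<rho> x\<bar> \<le> C" using u_bdd by blast
  have usc: "upper_semicont (ubar u)" by (rule ubar_usc[OF C])
  have lsc: "lower_semicont (ulow u)" by (rule ulow_lsc[OF C])
  have ubX: "ubar u \<in> Xbar" unfolding Xbar_def bounded_iff using ubar_bounded(1)[OF C] by auto
  have ulX: "ulow u \<in> Xbar" unfolding Xbar_def bounded_iff using ubar_bounded(2)[OF C] by auto
  have us: "\<And>x. ustar (ubar u) x = ubar u x" using ustar_usc[OF usc] .
  have ls: "\<And>x. lstar (ulow u) x = ulow u x" using lstar_lsc[OF lsc] .
  have subsol: "visc_subsol \<Omega> g F (ubar u)"
    unfolding visc_subsol_def us
  proof (intro conjI ballI impI ubX)
    fix \<phi> x assume phi: "\<phi> \<in> Cb_inf" and x: "x \<in> closure \<Omega>"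
      and mx: "\<forall>y\<in>closure \<Omega>. ubar u y - \<phi> y \<le> ubar u x - \<phi> x"
    have fr: "x \<in> frontier \<Omega> \<longleftrightarrow> x \<notin> \<Omega>" using open_frontier_iff[OF \<Omega>_open x] .
    show "x \<in> \<Omega> \<Longrightarrow> Flower \<Omega> F x (ubar u x) (grad \<phi> x) (hess \<phi> x) \<le> 0"
    proof -
      assume xO: "x \<in> \<Omega>"
      obtain R1 where R1: "0 < R1" "ball x R1 \<subseteq> \<Omega>" using \<Omega>_open xO open_contains_ball by blast
      have H: "\<forall>w\<in>ball x R1. w \<notin> \<Omega> \<longrightarrow> g w \<le> \<phi> w + (ubar u x - \<phi> x)" using R1 by blast
      from sub_core[OF Cb_sub A_b cons u_sol C phi x mx R1(1) H] xO
      show ?thesis by blast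
    qed
    show "x \<in> frontier \<Omega> \<Longrightarrow> min (ereal (ubar u x - ustar g x)) (Flower \<Omega> F x (ubar u x) (grad \<phi> x) (hess \<phi> x)) \<le> 0"
    proof -
      assume xf: "x \<in> frontier \<Omega>"
      show ?thesis
      proof (cases "ubar u x \<le> ustar g x")
        case True
        then have "ereal (ubar u x - ustar g x) \<le> 0" by simp
        then show ?thesis by (simp add: min_le_iff_disj)
      next
        case False
        define gap where "gap = ubar u x - ustar g x"
        have gp: "0 < gap" using False by (simp add: gap_def)
        have "Limsup (nhds x) (\<lambda>y. ereal (g y)) < ereal (ustar g x + gap / 2)"
          unfolding gstar_eq(1)[OF g_bdd, symmetric] using gp by simp
        then have e1: "eventually (\<lambda>w. g w < ustar g x + gap / 2) (nhds x)"
          by (auto dest: Limsup_lessD)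
        have e2: "eventually (\<lambda>w. \<bar>\<phi> w - \<phi> x\<bar> < gap / 2) (nhds x)"
          using phi gp unfolding Cb_inf_def by (intro diff_cont_ev) (auto dest: spec[of _ "[]"])
        have "eventually (\<lambda>w. g w < ustar g x + gap / 2 \<and> \<bar>\<phi> w - \<phi> x\<bar> < gap / 2) (nhds x)"
          using e1 e2 by (rule eventually_conj)
        then obtain R1 where R1: "0 < R1" "\<And>w. dist w x < R1 \<Longrightarrow> g w < ustar g x + gap / 2 \<and> \<bar>\<phi> w - \<phi> x\<bar> < gap / 2"
          unfolding eventually_nhds_metric by blast
        have H: "\<forall>w\<in>ball x R1. w \<notin> \<Omega> \<longrightarrow> g w \<le> \<phi> w + (ubar u x - \<phi> x)"
        proof (intro ballI impI)
          fix w assume "w \<in> ball x R1"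
          then have "dist w x < R1" by (simp add: dist_commute)
          from R1(2)[OF this] have a: "g w < ustar g x + gap / 2" and b: "\<bar>\<phi> w - \<phi> x\<bar> < gap / 2" by auto
          have "\<phi> x - gap / 2 < \<phi> w" using abs_less_iff[THEN iffD1, OF b] by linarith
          then show "g w \<le> \<phi> w + (ubar u x - \<phi> x)" using a unfolding gap_def by (simp add: field_simps)
        qed
        from sub_core[OF Cb_sub A_b cons u_sol C phi x mx R1(1) H] xf
        show ?thesis by blast
      qed
    qed
  qed
  have supsol: "visc_supersol \<Omega> g F (ulow u)"
    unfolding visc_supersol_def ls
  proof (intro conjI ballI impI ulX)
    fix \<phi> x assume phi: "\<phi> \<in> Cb_inf" and x: "x \<in> closure \<Omega>"
      and mx: "\<forall>y\<in>closure \<Omega>. ulow u x - \<phi> x \<le> ulow u y - \<phi> y"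
    show "x \<in> \<Omega> \<Longrightarrow> 0 \<le> Fupper \<Omega> F x (ulow u x) (grad \<phi> x) (hess \<phi> x)"
    proof -
      assume xO: "x \<in> \<Omega>"
      obtain R1 where R1: "0 < R1" "ball x R1 \<subseteq> \<Omega>" using \<Omega>_open xO open_contains_ball by blast
      have H: "\<forall>w\<in>ball x R1. w \<notin> \<Omega> \<longrightarrow> \<phi> w + (ulow u x - \<phi> x) \<le> g w" using R1 by blast
      from super_core[OF Cb_sub A_b cons u_sol C phi x mx R1(1) H] xO
      show ?thesis by blast
    qed
    show "x \<in> frontier \<Omega> \<Longrightarrow> 0 \<le> max (ereal (ulow u x - lstar g x)) (Fupper \<Omega> F x (ulow u x) (grad \<phi> x) (hess \<phi> x))"
    proof -
      assume xf: "x \<in> frontier \<Omega>"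
      show ?thesis
      proof (cases "lstar g x \<le> ulow u x")
        case True
        then have "0 \<le> ereal (ulow u x - lstar g x)" by simp
        then show ?thesis by (simp add: le_max_iff_disj)
      next
        case False
        define gap where "gap = lstar g x - ulow u x"
        have gp: "0 < gap" using False by (simp add: gap_def)
        have "ereal (lstar g x - gap / 2) < Liminf (nhds x) (\<lambda>y. ereal (g y))"
          unfolding gstar_eq(2)[OF g_bdd, symmetric] using gp by simp
        then have e1: "eventually (\<lambda>w. lstar g x - gap / 2 < g w) (nhds x)"
          by (auto dest: less_LiminfD)
        have e2: "eventually (\<lambda>w. \<bar>\<phi> w - \<phi> x\<bar> < gap / 2) (nhds x)"
          using phi gp unfolding Cb_inf_def by (intro diff_cont_ev) (auto dest: spec[of _ "[]"])
        have "eventually (\<lambda>w. lstar g x - gap / 2 < g w \<and> \<bar>\<phi> w - \<phi> x\<bar> < gap / 2) (nhds x)"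
          using e1 e2 by (rule eventually_conj)
        then obtain R1 where R1: "0 < R1" "\<And>w. dist w x < R1 \<Longrightarrow> lstar g x - gap / 2 < g w \<and> \<bar>\<phi> w - \<phi> x\<bar> < gap / 2"
          unfolding eventually_nhds_metric by blast
        have H: "\<forall>w\<in>ball x R1. w \<notin> \<Omega> \<longrightarrow> \<phi> w + (ulow u x - \<phi> x) \<le> g w"
        proof (intro ballI impI)
          fix w assume "w \<in> ball x R1"
          then have "dist w x < R1" by (simp add: dist_commute)
          from R1(2)[OF this] have a: "lstar g x - gap / 2 < g w" and b: "\<bar>\<phi> w - \<phi> x\<bar> < gap / 2" by auto
          have "\<phi> w < \<phi> x + gap / 2" using abs_less_iff[THEN iffD1, OF b] by linarith
          then show "\<phi> w + (ulow u x - \<phi> x) \<le> g w" using a unfolding gap_def by (simp add: field_simps)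
        qed
        from super_core[OF Cb_sub A_b cons u_sol C phi x mx R1(1) H] xf
        show ?thesis by blast
      qed
    qed
  qed
  show ?thesis using usc subsol lsc supsol by blast
qed

end
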